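(* Let $n\ge2$, $H=u^\perp+t_0u$ with $u\in S^{n-1}$, $t_0\in\mathbb{R}$, and let $\diamond_k\in\mathcal J_H(\mathcal K^n_n)$, $k=0,1,2,\dots$, with associated contractions $\varphi_{\diamond_k}$. (i) If $\diamond_k\to\diamond_0$ as $k\to\infty$ (i.e. $\|1_{\diamond_kK}-1_{\diamond_0K}\|_1\to0$ for all $K\in\mathcal K^n_n$), then $\varphi_{\diamond_k}\to\varphi_{\diamond_0}$ pointwise. (ii) If $\varphi_{\diamond_k}\to\varphi$ pointwise as $k\to\infty$ for some function $\varphi$, then there is an essentially unique $\diamond\in\mathcal J_H(\mathcal K^n_n)$ with associated contraction $\varphi_\diamond=\varphi$ such that $\diamond_k\to\diamond$.
   Context: $\mathcal K^n_n$: convex bodies in $\mathbb{R}^n$. $\mathcal J_H(\mathcal K^n_n)$: maps $\diamond:\mathcal K^n_n\to\mathcal L^n$ (measurable sets of finite measure) that are monotonic up to null sets, measure preserving, map balls to balls (up to null sets), and respect $H$-cylinders (if $A\subset(B(x,r)\cap H)+H^\perp$ essentially then $\diamond A\subset(B(x,r)\cap H)+H^\perp$ essentially). For such $\diamond$, $\varphi_\diamond:\mathbb{R}\to\mathbb{R}$ is the contraction with $\diamond B(x+tu,r)=B(x+\varphi_\diamond(t)u,r)$ essentially for all $x\in u^\perp$, $t\in\mathbb{R}$, $r>0$. *)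

theory Defs
  imports "HOL-Analysis.Analysis"
begin

definition convex_body :: "'a::euclidean_space set \<Rightarrow> bool" where
  "convex_body K \<longleftrightarrow> compact K \<and> convex K \<and> interior K \<noteq> {}"

definition fin_meas :: "'a::euclidean_space set \<Rightarrow> bool" where
  "fin_meas A \<longleftrightarrow> A \<in> sets lebesgue \<and> emeasure lebesgue A < \<infinity>"

definition ae_subset :: "'a::euclidean_space set \<Rightarrow> 'a set \<Rightarrow> bool" where
  "ae_subset A B \<longleftrightarrow> A - B \<in> null_sets lebesgue"

definition ae_eq :: "'a::euclidean_space set \<Rightarrow> 'a set \<Rightarrow> bool" where
  "ae_eq A B \<longleftrightarrow> ae_subset A B \<and> ae_subset B A"

definition hyperplane :: "'a::euclidean_space \<Rightarrow> real \<Rightarrow> 'a set" where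
  "hyperplane u t0 = {y. y \<bullet> u = t0}"

definition hcyl :: "'a::euclidean_space \<Rightarrow> real \<Rightarrow> 'a \<Rightarrow> real \<Rightarrow> 'a set" where
  "hcyl u t0 x r = {z + s *\<^sub>R u | z s. z \<in> cball x r \<inter> hyperplane u t0}"

text \<open>The class J_H(K^n_n); maps are total on sets, but only their behaviour on
  convex bodies matters.\<close>
definition JH :: "'a::euclidean_space \<Rightarrow> real \<Rightarrow> ('a set \<Rightarrow> 'a set) set" where
  "JH u t0 = {D. (\<forall>K. convex_body K \<longrightarrow> fin_meas (D K))
     \<and> (\<forall>K L. convex_body K \<and> convex_body L \<and> K \<subseteq> L \<longrightarrow> ae_subset (D K) (D L))
     \<and> (\<forall>K. convex_body K \<longrightarrow> emeasure lebesgue (D K) = emeasure lebesgue K)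
     \<and> (\<forall>x r. r > 0 \<longrightarrow> (\<exists>y s. s > 0 \<and> ae_eq (D (cball x r)) (cball y s)))
     \<and> (\<forall>A x r. convex_body A \<and> r > 0 \<and> ae_subset A (hcyl u t0 x r)
           \<longrightarrow> ae_subset (D A) (hcyl u t0 x r))}"

definition assoc_contraction :: "'a::euclidean_space \<Rightarrow> ('a set \<Rightarrow> 'a set) \<Rightarrow> (real \<Rightarrow> real) \<Rightarrow> bool" where
  "assoc_contraction u D phi \<longleftrightarrow>
     (\<forall>x t r. x \<bullet> u = 0 \<and> r > 0 \<longrightarrow>
        ae_eq (D (cball (x + t *\<^sub>R u) r)) (cball (x + phi t *\<^sub>R u) r))"

text \<open>D_k \<rightarrow> D: the L1 distance of indicators (= measure of symmetric difference) tends to 0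
  for every convex body.\<close>
definition map_conv :: "(nat \<Rightarrow> 'a::euclidean_space set \<Rightarrow> 'a set) \<Rightarrow> ('a set \<Rightarrow> 'a set) \<Rightarrow> bool" where
  "map_conv Ds D \<longleftrightarrow> (\<forall>K. convex_body K \<longrightarrow>
     ((\<lambda>k. emeasure lebesgue ((Ds k K - D K) \<union> (D K - Ds k K))) \<longlongrightarrow> 0) sequentially)"

end

theory Submission
  imports Defs
begin


lemma null_subset: "A \<subseteq> B \<Longrightarrow> B \<in> null_sets lebesgue \<Longrightarrow> A \<in> null_sets lebesgue"
  by (rule completion.complete2)

lemma ae_subset_trans: "ae_subset A B \<Longrightarrow> ae_subset B C \<Longrightarrow> ae_subset A C"
  unfolding ae_subset_def
  by (rule null_subset[of _ "(A - B) \<union> (B - C)"]) auto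

lemma ae_subset_refl: "ae_subset A A" by (simp add: ae_subset_def)

lemma subset_ae_subset: assumes "A \<subseteq> B" shows "ae_subset A B"
proof -
  have e: "A - B = {}" using assms by auto
  show ?thesis unfolding ae_subset_def e by simp
qed

lemma convex_body_cball: "r > 0 \<Longrightarrow> convex_body (cball (c::'a::euclidean_space) r)"
  unfolding convex_body_def by auto

lemma ball_in_diff:
  fixes a b :: "'a::euclidean_space"
  assumes "a \<noteq> b" "r1 > 0" "dist a b + r1 - r2 > 0"
  defines "\<delta> \<equiv> min r1 (dist a b + r1 - r2) / 4"
  shows "ball (a + ((r1 - \<delta>) / dist a b) *\<^sub>R (a - b)) \<delta> \<subseteq> cball a r1 - cball b r2"
proof
  fix q assume q: "q \<in> ball (a + ((r1 - \<delta>) / dist a b) *\<^sub>R (a - b)) \<delta>"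
  let ?p = "a + ((r1 - \<delta>) / dist a b) *\<^sub>R (a - b)"
  define d where "d = dist a b"
  have d: "d > 0" using assms by (simp add: d_def)
  have dp: "\<delta> > 0" "\<delta> \<le> r1/4" "\<delta> \<le> (d + r1 - r2)/4" using assms by (auto simp: \<delta>_def d_def)
  have nab: "norm (a - b) = d" by (simp add: d_def dist_norm)
  have "norm (?p - a) = (r1 - \<delta>)" using d dp nab by (simp add: norm_scaleR d_def)
  moreover have "norm (q - ?p) < \<delta>" using q by (simp add: dist_norm norm_minus_commute)
  ultimately have "norm (q - a) < r1"
    using norm_triangle_ineq[of "q - ?p" "?p - a"] by simp
  hence qa: "q \<in> cball a r1" by (simp add: dist_norm norm_minus_commute)
  have "?p - b = (1 + (r1 - \<delta>) / d) *\<^sub>R (a - b)" by (simp add: algebra_simps d_def)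
  hence n1: "norm (?p - b) = (1 + (r1 - \<delta>) / d) * d" using d dp nab by (simp add: norm_scaleR)
  have "(1 + (r1 - \<delta>) / d) * d = d + r1 - \<delta>" using d by (simp add: field_simps)
  hence "norm (?p - b) = d + r1 - \<delta>" using n1 by linarith
  hence "norm (q - b) > d + r1 - 2 * \<delta>"
    using \<open>norm (q - ?p) < \<delta>\<close> norm_triangle_ineq[of "?p - q" "q - b"] norm_minus_commute[of q ?p] by simp
  hence "q \<notin> cball b r2" using dp by (simp add: dist_norm norm_minus_commute)
  with qa show "q \<in> cball a r1 - cball b r2" by simp
qed

lemma emeasure_ball_pos:
  "r > 0 \<Longrightarrow> emeasure lebesgue (ball (c::'a::euclidean_space) r) = ennreal (unit_ball_vol (DIM('a)) * r ^ DIM('a))"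
  by (simp add: emeasure_ball)

lemma ae_eq_sym: "ae_eq A B \<Longrightarrow> ae_eq B A" by (simp add: ae_eq_def)

lemma ae_eqD1: "ae_eq A B \<Longrightarrow> ae_subset A B" by (simp add: ae_eq_def)
lemma ae_eqD2: "ae_eq A B \<Longrightarrow> ae_subset B A" by (simp add: ae_eq_def)

lemma symdiff_ae:
  assumes "A \<in> sets lebesgue" "A' \<in> sets lebesgue" "B \<in> sets lebesgue" "B' \<in> sets lebesgue"
    "ae_eq A A'" "ae_eq B B'"
  shows "emeasure lebesgue ((A - B) \<union> (B - A)) = emeasure lebesgue ((A' - B') \<union> (B' - A'))"
proof (rule emeasure_eq_AE)
  have N: "(A - A') \<union> (A' - A) \<union> (B - B') \<union> (B' - B) \<in> null_sets lebesgue"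
    using assms(5,6) by (auto simp: ae_eq_def ae_subset_def)
  show "AE x in lebesgue. (x \<in> (A - B) \<union> (B - A)) = (x \<in> (A' - B') \<union> (B' - A'))"
    by (rule AE_I'[OF N]) auto
qed (use assms in auto)

lemma part1:
  fixes u :: "'a::euclidean_space"
  assumes u: "norm u = 1" and JH: "\<And>k. Ds k \<in> JH u t0"
    and ac: "\<And>k. assoc_contraction u (Ds k) (phis k)" and mc: "map_conv Ds (Ds 0)"
  shows "(\<lambda>k. phis k t) \<longlonglongrightarrow> phis 0 t"
proof -
  define K where "K = cball (t *\<^sub>R u) 1"
  have cb: "convex_body K" unfolding K_def by (rule convex_body_cball) simp
  have meas: "Ds k K \<in> sets lebesgue" for k
    using JH[of k] cb by (auto simp: JH_def fin_meas_def)
  have ae: "ae_eq (Ds k K) (cball (phis k t *\<^sub>R u) 1)" for k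
    using ac[of k] unfolding assoc_contraction_def K_def
    by (metis add_0 inner_zero_left zero_less_one)
  define S where "S k = (Ds k K - Ds 0 K) \<union> (Ds 0 K - Ds k K)" for k
  define T where "T k = (cball (phis k t *\<^sub>R u) 1 - cball (phis 0 t *\<^sub>R u) 1) \<union>
      (cball (phis 0 t *\<^sub>R u) 1 - cball (phis k t *\<^sub>R u) 1)" for k
  have eqm: "emeasure lebesgue (S k) = emeasure lebesgue (T k)" for k
    unfolding S_def T_def by (rule symdiff_ae) (use meas ae in auto)
  have lim: "(\<lambda>k. emeasure lebesgue (S k)) \<longlonglongrightarrow> 0"
    using mc cb unfolding map_conv_def S_def by auto
  show ?thesis
    unfolding tendsto_iff
  proof (intro allI impI)
    fix \<epsilon> :: real assume e: "\<epsilon> > 0"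
    define \<delta>0 where "\<delta>0 = min 1 \<epsilon> / 4"
    have d0: "\<delta>0 > 0" using e by (simp add: \<delta>0_def)
    define c where "c = ennreal (unit_ball_vol (DIM('a)) * \<delta>0 ^ DIM('a))"
    have c: "c > 0" using d0 by (simp add: c_def)
    have ev: "eventually (\<lambda>k. emeasure lebesgue (S k) < c) sequentially"
      using order_tendstoD(2)[OF lim c] .
    show "eventually (\<lambda>k. dist (phis k t) (phis 0 t) < \<epsilon>) sequentially"
    proof (rule eventually_mono[OF ev], rule ccontr)
      fix k assume lt: "emeasure lebesgue (S k) < c" and nd: "\<not> dist (phis k t) (phis 0 t) < \<epsilon>"
      define a where "a = phis k t *\<^sub>R u"
      define b where "b = phis 0 t *\<^sub>R u"
      have dab: "dist a b = dist (phis k t) (phis 0 t)"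
        using u by (simp add: a_def b_def dist_norm scaleR_diff_left[symmetric] dist_real_def)
      hence dge: "dist a b \<ge> \<epsilon>" using nd by simp
      hence ab: "a \<noteq> b" using e by auto
      define \<delta> where "\<delta> = min 1 (dist a b + 1 - 1) / 4"
      define p where "p = a + ((1 - \<delta>) / dist a b) *\<^sub>R (a - b)"
      have sub: "ball p \<delta> \<subseteq> cball a 1 - cball b 1"
        unfolding p_def \<delta>_def by (rule ball_in_diff) (use ab dge e in auto)
      have "\<delta>0 \<le> \<delta>" using dge by (simp add: \<delta>_def \<delta>0_def)
      hence "ball p \<delta>0 \<subseteq> ball p \<delta>" by (rule subset_ball)
      hence "ball p \<delta>0 \<subseteq> T k" using sub unfolding T_def a_def b_def by blast
      hence "emeasure lebesgue (ball p \<delta>0) \<le> emeasure lebesgue (T k)"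
        by (rule emeasure_mono) (auto simp: T_def)
      moreover have "emeasure lebesgue (ball p \<delta>0) = c"
        using d0 by (simp add: c_def emeasure_ball)
      ultimately show False using lt eqm[of k] by simp
    qed
  qed
qed

lemma phi_lip:
  fixes u :: "'a::euclidean_space"
  assumes u: "norm u = 1" and D: "D \<in> JH u t0" and ac: "assoc_contraction u D phi"
  shows "\<bar>phi t - phi s\<bar> \<le> \<bar>t - s\<bar>"
proof (rule ccontr)
  assume nl: "\<not> \<bar>phi t - phi s\<bar> \<le> \<bar>t - s\<bar>"
  define B1 where "B1 = cball (t *\<^sub>R u) 1"
  define B2 where "B2 = cball (s *\<^sub>R u) (1 + \<bar>t - s\<bar>)"
  have dts: "dist (t *\<^sub>R u) (s *\<^sub>R u) = \<bar>t - s\<bar>"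
    using u by (simp add: dist_norm scaleR_diff_left[symmetric])
  have sub: "B1 \<subseteq> B2" unfolding B1_def B2_def
    by (subst cball_subset_cball_iff) (use dts in \<open>simp add: dist_commute\<close>)
  have cb1: "convex_body B1" "convex_body B2" unfolding B1_def B2_def
    by (auto intro: convex_body_cball)
  have m: "ae_subset (D B1) (D B2)" using D cb1 sub by (auto simp: JH_def)
  have e1: "ae_eq (D B1) (cball (phi t *\<^sub>R u) 1)"
    using ac unfolding assoc_contraction_def B1_def by (metis add_0 inner_zero_left zero_less_one)
  have e2: "ae_eq (D B2) (cball (phi s *\<^sub>R u) (1 + \<bar>t - s\<bar>))"
    using ac unfolding assoc_contraction_def B2_def
    by (metis add_0 inner_zero_left abs_ge_zero add_pos_nonneg zero_less_one)
  have as: "ae_subset (cball (phi t *\<^sub>R u) 1) (cball (phi s *\<^sub>R u) (1 + \<bar>t - s\<bar>))"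
    by (rule ae_subset_trans[OF ae_eqD2[OF e1] ae_subset_trans[OF m ae_eqD1[OF e2]]])
  define a where "a = phi t *\<^sub>R u"
  define b where "b = phi s *\<^sub>R u"
  have dab: "dist a b = \<bar>phi t - phi s\<bar>"
    using u by (simp add: a_def b_def dist_norm scaleR_diff_left[symmetric])
  have ab: "a \<noteq> b" using dab nl by auto
  define \<delta> where "\<delta> = min 1 (dist a b + 1 - (1 + \<bar>t - s\<bar>)) / 4"
  define p where "p = a + ((1 - \<delta>) / dist a b) *\<^sub>R (a - b)"
  have sub2: "ball p \<delta> \<subseteq> cball a 1 - cball b (1 + \<bar>t - s\<bar>)"
    unfolding p_def \<delta>_def by (rule ball_in_diff) (use ab dab nl in auto)
  have "ball p \<delta> \<in> null_sets lebesgue"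
    by (rule null_subset[OF sub2]) (use as in \<open>simp add: ae_subset_def a_def b_def\<close>)
  hence "emeasure lebesgue (ball p \<delta>) = 0" by auto
  moreover have "\<delta> > 0" using dab nl by (simp add: \<delta>_def)
  ultimately show False using unit_ball_vol_pos[of "real DIM('a)"] by (simp add: emeasure_ball)
qed

lemma limit_unique:
  assumes "map_conv Ds D" "map_conv Ds D'" "convex_body K"
    "D K \<in> sets lebesgue" "D' K \<in> sets lebesgue" "\<And>k. Ds k K \<in> sets lebesgue"
  shows "ae_eq (D' K) (D K)"
proof -
  define X where "X = (D' K - D K) \<union> (D K - D' K)"
  define e1 where "e1 k = emeasure lebesgue ((Ds k K - D K) \<union> (D K - Ds k K))" for k
  define e2 where "e2 k = emeasure lebesgue ((Ds k K - D' K) \<union> (D' K - Ds k K))" for k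
  have l1: "e1 \<longlonglongrightarrow> 0" using assms(1,3) unfolding map_conv_def e1_def by auto
  have l2: "e2 \<longlonglongrightarrow> 0" using assms(2,3) unfolding map_conv_def e2_def by auto
  have l: "(\<lambda>k. e1 k + e2 k) \<longlonglongrightarrow> 0" using tendsto_add[OF l1 l2] by simp
  have le: "emeasure lebesgue X \<le> e1 k + e2 k" for k
  proof -
    have "X \<subseteq> ((Ds k K - D K) \<union> (D K - Ds k K)) \<union> ((Ds k K - D' K) \<union> (D' K - Ds k K))"
      unfolding X_def by auto
    hence "emeasure lebesgue X \<le> emeasure lebesgue (((Ds k K - D K) \<union> (D K - Ds k K)) \<union> ((Ds k K - D' K) \<union> (D' K - Ds k K)))"
      by (rule emeasure_mono) (use assms in auto)
    also have "\<dots> \<le> e1 k + e2 k" unfolding e1_def e2_def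
      by (rule emeasure_subadditive) (use assms in auto)
    finally show ?thesis .
  qed
  have "emeasure lebesgue X \<le> 0"
    by (rule tendsto_le[OF _ l tendsto_const]) (use le in auto)
  hence "X \<in> null_sets lebesgue" using assms(4,5) unfolding X_def by (auto intro: null_setsI)
  thus ?thesis unfolding ae_eq_def ae_subset_def X_def
    by (auto intro: null_subset)
qed



lemma borel_lebesgue: "A \<in> sets borel \<Longrightarrow> A \<in> sets lebesgue"
  by (metis sets_completionI_sets sets_lborel)

definition uinv :: "'a::euclidean_space \<Rightarrow> ('a \<Rightarrow> real) \<Rightarrow> bool" where
  "uinv u g \<longleftrightarrow> (\<forall>z s. g (z + s *\<^sub>R u) = g z)"

definition Sh :: "'a::euclidean_space \<Rightarrow> ('a \<Rightarrow> real) \<Rightarrow> 'a set \<Rightarrow> 'a set" where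
  "Sh u g A = {z. z - g z *\<^sub>R u \<in> A}"

lemma Sh_mono: "A \<subseteq> B \<Longrightarrow> Sh u g A \<subseteq> Sh u g B"
  unfolding Sh_def by auto

lemma Sh_comp:
  assumes "uinv u e"
  shows "Sh u g (Sh u e A) = Sh u (\<lambda>z. g z + e z) A"
proof -
  have "e (z - g z *\<^sub>R u) = e z" for z
    using assms unfolding uinv_def by (metis diff_conv_add_uminus scaleR_minus_left)
  thus ?thesis unfolding Sh_def by (auto simp: algebra_simps)
qed

lemma Sh_borel:
  assumes [measurable]: "g \<in> borel_measurable borel" and A: "A \<in> sets borel"
  shows "Sh u g A \<in> sets borel"
proof -
  have m: "(\<lambda>z. z - g z *\<^sub>R u) \<in> borel_measurable borel" by measurable
  have "Sh u g A = (\<lambda>z. z - g z *\<^sub>R u) -` A \<inter> space borel" by (auto simp: Sh_def)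
  thus ?thesis using measurable_sets[OF m A] by simp
qed

lemma emeasure_translate: "emeasure lebesgue ((\<lambda>x. x + c) ` S) = emeasure lebesgue (S::'a::euclidean_space set)"
  using emeasure_lebesgue_affine[of 1 c S] by simp

lemma sets_translate: "S \<in> sets lebesgue \<Longrightarrow> (\<lambda>x. x + c) ` S \<in> sets lebesgue"
  using lebesgue_sets_translation[of S c] by (simp add: add.commute)

lemma uinv_floor:
  assumes "uinv u g"
  shows "uinv u (\<lambda>z. \<delta> * of_int \<lfloor>g z / \<delta>\<rfloor>)"
  using assms by (simp add: uinv_def)

lemma S1:
  fixes u :: "'a::euclidean_space" and \<delta> :: real
  assumes g[measurable]: "g \<in> borel_measurable borel" and ui: "uinv u g" and A: "A \<in> sets lebesgue"
  defines "gd \<equiv> (\<lambda>z. \<delta> * of_int \<lfloor>g z / \<delta>\<rfloor>)"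
  shows "Sh u gd A \<in> sets lebesgue" "emeasure lebesgue (Sh u gd A) = emeasure lebesgue A"
proof -
  define C where "C j = {z. \<lfloor>g z / \<delta>\<rfloor> = j}" for j :: int
  have Cb: "C j \<in> sets borel" for j unfolding C_def by measurable
  hence Cl: "C j \<in> sets lebesgue" for j by (rule borel_lebesgue)
  have gu: "g (z + s *\<^sub>R u) = g z" for z s using ui by (simp add: uinv_def)
  have piece: "Sh u gd A \<inter> C j = (\<lambda>x. x + (\<delta> * of_int j) *\<^sub>R u) ` (A \<inter> C j)" for j
  proof safe
    fix z assume z: "z \<in> Sh u gd A" "z \<in> C j"
    define w where "w = z - (\<delta> * of_int j) *\<^sub>R u"
    have gw: "g w = g z" unfolding w_def
      by (metis gu diff_conv_add_uminus scaleR_minus_left)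
    have "w \<in> A" using z unfolding w_def Sh_def gd_def C_def by simp
    moreover have "w \<in> C j" using z gw unfolding C_def by simp
    moreover have "z = w + (\<delta> * of_int j) *\<^sub>R u" unfolding w_def by simp
    ultimately show "z \<in> (\<lambda>x. x + (\<delta> * of_int j) *\<^sub>R u) ` (A \<inter> C j)" by blast
  next
    fix w assume w: "w \<in> A" "w \<in> C j"
    have gw: "g (w + (\<delta> * of_int j) *\<^sub>R u) = g w" by (rule gu)
    show "w + (\<delta> * of_int j) *\<^sub>R u \<in> Sh u gd A"
      using w gw unfolding Sh_def gd_def C_def by simp
    show "w + (\<delta> * of_int j) *\<^sub>R u \<in> C j"
      using w gw unfolding C_def by simp
  qed
  have cov: "X = (\<Union>j. X \<inter> C j)" for X by (auto simp: C_def)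
  have disj: "disjoint_family_on (\<lambda>j. X \<inter> C j) UNIV" for X
    by (auto simp: disjoint_family_on_def C_def)
  have pl: "Sh u gd A \<inter> C j \<in> sets lebesgue" for j
    unfolding piece by (rule sets_translate) (use A Cl in auto)
  have "Sh u gd A = (\<Union>j. Sh u gd A \<inter> C j)" by (rule cov)
  also have "\<dots> \<in> sets lebesgue" using pl by (intro sets.countable_UN) auto
  finally show "Sh u gd A \<in> sets lebesgue" .
  have "emeasure lebesgue (Sh u gd A) = emeasure lebesgue (\<Union>j. Sh u gd A \<inter> C j)"
    using cov by metis
  also have "\<dots> = (\<integral>\<^sup>+j. emeasure lebesgue (Sh u gd A \<inter> C j) \<partial>count_space UNIV)"
    by (rule emeasure_UN_countable) (use pl disj in auto)
  also have "\<dots> = (\<integral>\<^sup>+j. emeasure lebesgue (A \<inter> C j) \<partial>count_space UNIV)"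
    by (rule nn_integral_cong) (simp add: piece emeasure_translate)
  also have "\<dots> = emeasure lebesgue (\<Union>j. A \<inter> C j)"
    by (rule emeasure_UN_countable[symmetric]) (use A Cl disj in auto)
  also have "\<dots> = emeasure lebesgue A" using cov by metis
  finally show "emeasure lebesgue (Sh u gd A) = emeasure lebesgue A" .
qed

lemma emeasure_interior_convex:
  fixes L :: "'a::euclidean_space set"
  assumes "convex L" "closed L"
  shows "emeasure lebesgue (interior L) = emeasure lebesgue L"
proof -
  have "frontier L \<in> null_sets lebesgue"
    using negligible_convex_frontier[OF assms(1)] negligible_iff_null_sets by blast
  moreover have "L \<in> sets lebesgue" using assms(2) by (simp add: borel_lebesgue borel_closed)
  ultimately have "emeasure lebesgue (L - frontier L) = emeasure lebesgue L"
    by (rule emeasure_Diff_null_set)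
  moreover have "L - frontier L = interior L"
    using assms(2) interior_subset by (auto simp: frontier_def closure_closed)
  ultimately show ?thesis by simp
qed

lemma S2:
  fixes u :: "'a::euclidean_space"
  assumes u: "norm u = 1" and g[measurable]: "g \<in> borel_measurable borel" and ui: "uinv u g"
    and L: "compact L" "convex L"
  shows "Sh u g L \<in> sets borel" "emeasure lebesgue (Sh u g L) = emeasure lebesgue L"
proof -
  show Shb: "Sh u g L \<in> sets borel" by (rule Sh_borel) (use L in \<open>auto intro: borel_compact\<close>)
  define Lp where "Lp \<delta> = {p + t *\<^sub>R u | p t. p \<in> L \<and> t \<in> {0..\<delta>}}" for \<delta> :: real
  define Lm where "Lm \<delta> = {z. z \<in> L \<and> z - \<delta> *\<^sub>R u \<in> L}" for \<delta> :: real
  have Lpc: "compact (Lp \<delta>)" for \<delta>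
  proof -
    have "compact ((\<lambda>t. t *\<^sub>R u) ` {0..\<delta>})"
      by (rule compact_continuous_image) (auto intro!: continuous_intros)
    hence "compact {x + y | x y. x \<in> L \<and> y \<in> (\<lambda>t. t *\<^sub>R u) ` {0..\<delta>}}"
      using compact_sums L(1) by blast
    moreover have "{x + y | x y. x \<in> L \<and> y \<in> (\<lambda>t. t *\<^sub>R u) ` {0..\<delta>}} = Lp \<delta>"
      unfolding Lp_def by blast
    ultimately show ?thesis by simp
  qed
  have Lmc: "compact (Lm \<delta>)" for \<delta>
  proof -
    have "Lm \<delta> = L \<inter> (\<lambda>z. z - \<delta> *\<^sub>R u) -` L" unfolding Lm_def by auto
    moreover have "closed ((\<lambda>z. z - \<delta> *\<^sub>R u) -` L)"
      by (rule continuous_closed_vimage) (use L compact_imp_closed in \<open>auto intro!: continuous_intros\<close>)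
    ultimately show ?thesis using L(1) by (simp add: compact_Int_closed)
  qed
  have Lpl: "Lp \<delta> \<in> sets lebesgue" for \<delta> using Lpc by (simp add: borel_lebesgue borel_compact)
  have Lml: "Lm \<delta> \<in> sets lebesgue" for \<delta> using Lmc by (simp add: borel_lebesgue borel_compact)
  have bounds: "emeasure lebesgue (Lm \<delta>) \<le> emeasure lebesgue (Sh u g L) \<and>
      emeasure lebesgue (Sh u g L) \<le> emeasure lebesgue (Lp \<delta>)" if d: "\<delta> > 0" for \<delta>
  proof -
    define gd where "gd = (\<lambda>z. \<delta> * of_int \<lfloor>g z / \<delta>\<rfloor>)"
    define e where "e = (\<lambda>z. g z - gd z)"
    have e_m[measurable]: "e \<in> borel_measurable borel" unfolding e_def gd_def by measurable
    have uie: "uinv u e" using ui unfolding uinv_def e_def gd_def by simp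
    have e01: "0 \<le> e z" "e z \<le> \<delta>" for z
    proof -
      have a: "of_int \<lfloor>g z / \<delta>\<rfloor> \<le> g z / \<delta>" and b: "g z / \<delta> < of_int \<lfloor>g z / \<delta>\<rfloor> + 1"
        by linarith+
      have c1: "\<delta> * of_int \<lfloor>g z / \<delta>\<rfloor> \<le> \<delta> * (g z / \<delta>)" by (rule mult_left_mono[OF a]) (use d in simp)
      have c2: "\<delta> * (g z / \<delta>) < \<delta> * (of_int \<lfloor>g z / \<delta>\<rfloor> + 1)" by (rule mult_strict_left_mono[OF b d])
      have c3: "\<delta> * (g z / \<delta>) = g z" using d by simp
      have "\<delta> * of_int \<lfloor>g z / \<delta>\<rfloor> \<le> g z" "g z < \<delta> * of_int \<lfloor>g z / \<delta>\<rfloor> + \<delta>"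
        using c1 c2 c3 d by (simp_all add: algebra_simps)
      thus "0 \<le> e z" "e z \<le> \<delta>" unfolding e_def gd_def by auto
    qed
    have comp: "Sh u g L = Sh u gd (Sh u e L)"
      by (subst Sh_comp[OF uie]) (simp add: e_def)
    have up: "Sh u e L \<subseteq> Lp \<delta>"
    proof
      fix z assume "z \<in> Sh u e L"
      hence "z - e z *\<^sub>R u \<in> L" by (simp add: Sh_def)
      moreover have "z = (z - e z *\<^sub>R u) + e z *\<^sub>R u" by simp
      ultimately show "z \<in> Lp \<delta>" unfolding Lp_def using e01[of z] by force
    qed
    have lo: "Lm \<delta> \<subseteq> Sh u e L"
    proof
      fix z assume z: "z \<in> Lm \<delta>"
      hence z1: "z \<in> L" "z - \<delta> *\<^sub>R u \<in> L" by (auto simp: Lm_def)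
      have "(1 - e z / \<delta>) *\<^sub>R z + (e z / \<delta>) *\<^sub>R (z - \<delta> *\<^sub>R u) \<in> L"
        by (rule convexD[OF L(2) z1]) (use e01[of z] d in auto)
      moreover have "(1 - e z / \<delta>) *\<^sub>R z + (e z / \<delta>) *\<^sub>R (z - \<delta> *\<^sub>R u) = z - e z *\<^sub>R u"
        using d by (simp add: algebra_simps)
      ultimately show "z \<in> Sh u e L" by (simp add: Sh_def)
    qed
    have gdm[measurable]: "g \<in> borel_measurable borel" by simp
    have "emeasure lebesgue (Lm \<delta>) = emeasure lebesgue (Sh u gd (Lm \<delta>))"
      unfolding gd_def by (rule S1(2)[symmetric]) (use ui Lml in auto)
    also have "\<dots> \<le> emeasure lebesgue (Sh u g L)"
      unfolding comp by (rule emeasure_mono[OF Sh_mono[OF lo]]) (use Shb comp in \<open>auto intro: borel_lebesgue\<close>)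
    finally have 1: "emeasure lebesgue (Lm \<delta>) \<le> emeasure lebesgue (Sh u g L)" .
    have "emeasure lebesgue (Sh u g L) \<le> emeasure lebesgue (Sh u gd (Lp \<delta>))"
      unfolding comp by (rule emeasure_mono[OF Sh_mono[OF up]]) (unfold gd_def, rule S1(1), use ui Lpl in auto)
    also have "\<dots> = emeasure lebesgue (Lp \<delta>)"
      unfolding gd_def by (rule S1(2)) (use ui Lpl in auto)
    finally show ?thesis using 1 by simp
  qed
  define dj where "dj j = 1 / real (Suc j)" for j
  have djp: "dj j > 0" for j by (simp add: dj_def)
  have dj_small: "\<exists>j. dj j < r" if rp: "r > 0" for r
  proof -
    obtain j where "inverse (real (Suc j)) < r" using reals_Archimedean[OF rp] by auto
    thus ?thesis unfolding dj_def by (auto simp: inverse_eq_divide)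
  qed
  have djmono: "dj j' \<le> dj j" if "j \<le> j'" for j j'
    using that by (simp add: dj_def frac_le)
  have Lp_anti: "antimono_on UNIV (\<lambda>j. Lp (dj j))"
    unfolding monotone_on_def
  proof (intro ballI impI)
    fix j j' :: nat assume "j \<le> j'"
    hence "dj j' \<le> dj j" by (rule djmono)
    thus "Lp (dj j') \<subseteq> Lp (dj j)" unfolding Lp_def by fastforce
  qed
  have Lp_fin: "emeasure lebesgue (Lp (dj j)) \<noteq> \<infinity>" for j
    using fmeasurable_compact[OF Lpc[of "dj j"]] emeasure_completion[of "Lp (dj j)" lborel]
    by (auto simp: fmeasurable_def borel_compact[OF Lpc])
  have Lp_int: "(\<Inter>j. Lp (dj j)) = L"
  proof
    show "L \<subseteq> (\<Inter>j. Lp (dj j))" unfolding Lp_def using djp by (force intro: less_imp_le)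
  next
    show "(\<Inter>j. Lp (dj j)) \<subseteq> L"
    proof
      fix z assume z: "z \<in> (\<Inter>j. Lp (dj j))"
      show "z \<in> L"
      proof (rule ccontr)
        assume "z \<notin> L"
        then obtain r where r: "r > 0" "ball z r \<inter> L = {}"
        proof -
          have "open (- L)" using L(1) compact_imp_closed[of L] by (auto simp: closed_def)
          then obtain r where "r > 0" "ball z r \<subseteq> - L" using \<open>z \<notin> L\<close> open_contains_ball by blast
          thus ?thesis using that by auto
        qed
        obtain j where j: "dj j < r" using dj_small[OF r(1)] by auto
        from z have "z \<in> Lp (dj j)" by auto
        then obtain p t where pt: "z = p + t *\<^sub>R u" "p \<in> L" "0 \<le> t" "t \<le> dj j" unfolding Lp_def by auto
        have "dist z p = t" using pt u by (simp add: dist_norm)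
        hence "p \<in> ball z r" using pt j by simp
        thus False using r pt by auto
      qed
    qed
  qed
  have lim1: "(\<lambda>j. emeasure lebesgue (Lp (dj j))) \<longlonglongrightarrow> emeasure lebesgue L"
    using Lim_emeasure_decseq[of "\<lambda>j. Lp (dj j)" lebesgue] Lp_anti Lp_fin Lpl Lp_int by auto
  have le1: "emeasure lebesgue (Sh u g L) \<le> emeasure lebesgue L"
    by (rule tendsto_le[OF _ lim1 tendsto_const]) (use bounds djp in auto)
  have Lm_inc: "incseq (\<lambda>j. Lm (dj j))"
  proof (rule incseq_SucI)
    fix j
    show "Lm (dj j) \<subseteq> Lm (dj (Suc j))"
    proof
      fix z assume z: "z \<in> Lm (dj j)"
      hence z1: "z \<in> L" "z - dj j *\<^sub>R u \<in> L" by (auto simp: Lm_def)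
      define c where "c = dj (Suc j) / dj j"
      have c: "0 \<le> c" "c \<le> 1" using djp[of j] djp[of "Suc j"] djmono[of j "Suc j"] by (auto simp: c_def)
      have "(1 - c) *\<^sub>R z + c *\<^sub>R (z - dj j *\<^sub>R u) \<in> L"
        by (rule convexD[OF L(2) z1]) (use c in auto)
      moreover have "(1 - c) *\<^sub>R z + c *\<^sub>R (z - dj j *\<^sub>R u) = z - dj (Suc j) *\<^sub>R u"
        using djp[of j] by (simp add: c_def algebra_simps)
      ultimately show "z \<in> Lm (dj (Suc j))" using z1 by (simp add: Lm_def)
    qed
  qed
  have lim2: "(\<lambda>j. emeasure lebesgue (Lm (dj j))) \<longlonglongrightarrow> emeasure lebesgue (\<Union>j. Lm (dj j))"
    using Lim_emeasure_incseq[of "\<lambda>j. Lm (dj j)" lebesgue] Lm_inc Lml by auto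
  have le2: "emeasure lebesgue (\<Union>j. Lm (dj j)) \<le> emeasure lebesgue (Sh u g L)"
    by (rule tendsto_le[OF _ tendsto_const lim2]) (use bounds djp in auto)
  have intsub: "interior L \<subseteq> (\<Union>j. Lm (dj j))"
  proof
    fix z assume "z \<in> interior L"
    then obtain r where r: "r > 0" "ball z r \<subseteq> L" using open_interior open_contains_ball interior_subset
      by (metis subset_trans)
    obtain j where j: "dj j < r" using dj_small[OF r(1)] by auto
    have "dist z (z - dj j *\<^sub>R u) = dj j" using u djp[of j] by (simp add: dist_norm)
    hence "z - dj j *\<^sub>R u \<in> L" using r j by auto
    moreover have "z \<in> L" using r by auto
    ultimately show "z \<in> (\<Union>j. Lm (dj j))" unfolding Lm_def by auto
  qed
  have "emeasure lebesgue L = emeasure lebesgue (interior L)"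
    using emeasure_interior_convex[OF L(2) compact_imp_closed[OF L(1)]] by simp
  also have "\<dots> \<le> emeasure lebesgue (\<Union>j. Lm (dj j))"
    by (rule emeasure_mono[OF intsub]) (use Lml in auto)
  finally show "emeasure lebesgue (Sh u g L) = emeasure lebesgue L" using le1 le2 by simp
qed



definition Pu :: "'a::euclidean_space \<Rightarrow> 'a \<Rightarrow> 'a" where "Pu u z = z - (z \<bullet> u) *\<^sub>R u"
definition fib :: "'a::euclidean_space set \<Rightarrow> 'a \<Rightarrow> 'a \<Rightarrow> real set" where
  "fib K u y = {t. y + t *\<^sub>R u \<in> K}"
definition hi :: "'a::euclidean_space set \<Rightarrow> 'a \<Rightarrow> 'a \<Rightarrow> real" where
  "hi K u y = (if fib K u y = {} then 0 else Sup (fib K u y))"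
definition lo :: "'a::euclidean_space set \<Rightarrow> 'a \<Rightarrow> 'a \<Rightarrow> real" where
  "lo K u y = (if fib K u y = {} then 0 else Inf (fib K u y))"
definition mid :: "'a::euclidean_space set \<Rightarrow> 'a \<Rightarrow> 'a \<Rightarrow> real" where
  "mid K u y = (lo K u y + hi K u y) / 2"
definition hh :: "'a::euclidean_space set \<Rightarrow> 'a \<Rightarrow> 'a \<Rightarrow> real" where
  "hh K u y = (hi K u y - lo K u y) / 2"
definition gsh :: "(real \<Rightarrow> real) \<Rightarrow> 'a::euclidean_space set \<Rightarrow> 'a \<Rightarrow> 'a \<Rightarrow> real" where
  "gsh phi K u z = phi (mid K u (Pu u z)) - mid K u (Pu u z)"
definition Dphi :: "'a::euclidean_space \<Rightarrow> (real \<Rightarrow> real) \<Rightarrow> 'a set \<Rightarrow> 'a set" where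
  "Dphi u phi K = Sh u (gsh phi K u) K"

lemma uu: "norm u = 1 \<Longrightarrow> u \<bullet> u = 1"
  by (simp add: dot_square_norm)

lemma Pu_orth: "norm u = 1 \<Longrightarrow> Pu u z \<bullet> u = 0"
  by (simp add: Pu_def inner_diff_left uu)

lemma Pu_shift: "norm u = 1 \<Longrightarrow> Pu u (z + s *\<^sub>R u) = Pu u z"
  by (simp add: Pu_def inner_add_left uu algebra_simps)

lemma Pu_decomp: "z = Pu u z + (z \<bullet> u) *\<^sub>R u"
  by (simp add: Pu_def)

lemma Pu_idem: "y \<bullet> u = 0 \<Longrightarrow> Pu u y = y"
  by (simp add: Pu_def)

lemma Pu_cont: "continuous_on S (Pu u)"
proof -
  have e: "Pu u = (\<lambda>z. z - (z \<bullet> u) *\<^sub>R u)" by (rule ext) (simp add: Pu_def)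
  show ?thesis unfolding e by (intro continuous_intros)
qed

lemma arith_aux:
  fixes l h s p :: real
  shows "(l \<le> s - (p - (l + h) / 2) \<and> s - (p - (l + h) / 2) \<le> h) \<longleftrightarrow> \<bar>s - p\<bar> \<le> (h - l) / 2"
  unfolding abs_le_iff by (auto simp: field_simps)

lemma uinv_gsh: "norm u = 1 \<Longrightarrow> uinv u (gsh phi K u)"
  by (simp add: uinv_def gsh_def Pu_shift)

lemma pyth:
  assumes "norm u = 1" "v \<bullet> u = 0"
  shows "norm (v + t *\<^sub>R u) ^ 2 = norm v ^ 2 + t ^ 2"
proof -
  have "norm (v + t *\<^sub>R u) ^ 2 = (v + t *\<^sub>R u) \<bullet> (v + t *\<^sub>R u)" by (simp add: power2_norm_eq_inner)
  also have "\<dots> = v \<bullet> v + t ^ 2" using assms uu[OF assms(1)]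
    by (simp add: inner_add_left inner_add_right inner_commute power2_eq_square)
  finally show ?thesis by (simp add: power2_norm_eq_inner)
qed

lemma fib_compact:
  assumes "norm u = 1" "compact K"
  shows "compact (fib K u y)"
proof -
  have cl: "closed (fib K u y)"
  proof -
    have "fib K u y = (\<lambda>t. y + t *\<^sub>R u) -` K" by (auto simp: fib_def)
    moreover have "closed ((\<lambda>t. y + t *\<^sub>R u) -` K)"
      by (rule continuous_closed_vimage) (use assms compact_imp_closed in \<open>auto intro!: continuous_intros\<close>)
    ultimately show ?thesis by simp
  qed
  obtain B where B: "\<And>x. x \<in> K \<Longrightarrow> norm x \<le> B" using compact_imp_bounded[OF assms(2)]
    by (auto simp: bounded_iff)
  have "bounded (fib K u y)"
    unfolding bounded_iff
  proof (intro exI ballI)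
    fix t assume "t \<in> fib K u y"
    hence "norm (y + t *\<^sub>R u) \<le> B" using B by (auto simp: fib_def)
    moreover have "norm (t *\<^sub>R u) \<le> norm (y + t *\<^sub>R u) + norm y"
      using norm_triangle_ineq4[of "y + t *\<^sub>R u" y] by simp
    ultimately show "norm t \<le> B + norm y" using assms(1) by simp
  qed
  thus ?thesis using cl by (simp add: compact_eq_bounded_closed)
qed

lemma fib_convex:
  assumes "convex K" shows "convex (fib K u y)"
  unfolding convex_def fib_def
proof (safe)
  fix x z :: real and a b :: real
  assume "y + x *\<^sub>R u \<in> K" "y + z *\<^sub>R u \<in> K" "0 \<le> a" "0 \<le> b" "a + b = 1"
  hence "a *\<^sub>R (y + x *\<^sub>R u) + b *\<^sub>R (y + z *\<^sub>R u) \<in> K" using assms by (auto dest: convexD)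
  moreover have "a *\<^sub>R (y + x *\<^sub>R u) + b *\<^sub>R (y + z *\<^sub>R u) = y + (a * x + b * z) *\<^sub>R u"
    using \<open>a + b = 1\<close> by (simp add: algebra_simps flip: scaleR_add_left)
  ultimately show "y + (a *\<^sub>R x + b *\<^sub>R z) *\<^sub>R u \<in> K" by simp
qed

lemma fib_interval:
  assumes "norm u = 1" "compact K" "convex K" "fib K u y \<noteq> {}"
  shows "fib K u y = {lo K u y .. hi K u y}" "lo K u y \<le> hi K u y"
proof -
  have "connected (fib K u y)" using fib_convex[OF assms(3)] by (rule convex_connected)
  then obtain a b where ab: "fib K u y = {a..b}"
    using connected_compact_interval_1 fib_compact[OF assms(1,2)] by blast
  have "a \<le> b" using ab assms(4) by auto
  thus "fib K u y = {lo K u y .. hi K u y}" "lo K u y \<le> hi K u y"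
    using ab assms(4) by (auto simp: lo_def hi_def)
qed

lemma Dphi_mem:
  assumes u: "norm u = 1" and K: "compact K" "convex K"
  shows "z \<in> Dphi u phi K \<longleftrightarrow> fib K u (Pu u z) \<noteq> {} \<and>
      \<bar>z \<bullet> u - phi (mid K u (Pu u z))\<bar> \<le> hh K u (Pu u z)"
proof -
  let ?y = "Pu u z" and ?g = "gsh phi K u z"
  have "z - ?g *\<^sub>R u = ?y + (z \<bullet> u - ?g) *\<^sub>R u"
    by (simp add: Pu_def algebra_simps)
  hence "z \<in> Dphi u phi K \<longleftrightarrow> z \<bullet> u - ?g \<in> fib K u ?y"
    by (simp add: Dphi_def Sh_def fib_def)
  also have "\<dots> \<longleftrightarrow> fib K u ?y \<noteq> {} \<and> \<bar>z \<bullet> u - phi (mid K u ?y)\<bar> \<le> hh K u ?y"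
  proof (cases "fib K u ?y = {}")
    case True thus ?thesis by auto
  next
    case False
    from fib_interval[OF u K False] show ?thesis
      using False arith_aux[of "lo K u ?y" "z \<bullet> u" "phi (mid K u ?y)" "hi K u ?y"]
      by (simp add: gsh_def mid_def hh_def)
  qed
  finally show ?thesis .
qed

lemma cyl_closed_set:
  assumes "compact S"
  shows "closed {z. Pu u z \<in> Pu u ` S}"
proof -
  have "compact (Pu u ` S)" by (rule compact_continuous_image[OF Pu_cont assms])
  hence "closed (Pu u ` S)" by (rule compact_imp_closed)
  hence "closed (Pu u -` (Pu u ` S))"
    by (rule continuous_closed_vimage) (use continuous_on_eq_continuous_at[OF open_UNIV, of "Pu u"] Pu_cont in auto)
  thus ?thesis by (simp add: vimage_def)
qed

lemma fib_ne_iff: "norm u = 1 \<Longrightarrow> fib K u (Pu u z) \<noteq> {} \<longleftrightarrow> Pu u z \<in> Pu u ` K"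
proof
  assume u: "norm u = 1"
  assume "fib K u (Pu u z) \<noteq> {}"
  then obtain t where "Pu u z + t *\<^sub>R u \<in> K" by (auto simp: fib_def)
  moreover have "Pu u (Pu u z + t *\<^sub>R u) = Pu u z" using u by (simp add: Pu_shift Pu_idem Pu_orth)
  ultimately show "Pu u z \<in> Pu u ` K" by (metis image_eqI)
next
  assume u: "norm u = 1"
  assume "Pu u z \<in> Pu u ` K"
  then obtain p where p: "p \<in> K" "Pu u z = Pu u p" by auto
  hence "Pu u z + (p \<bullet> u) *\<^sub>R u \<in> K" by (simp add: Pu_def)
  thus "fib K u (Pu u z) \<noteq> {}" by (auto simp: fib_def)
qed

lemma hi_meas:
  assumes u: "norm u = 1" and K: "compact K"
  shows "(\<lambda>z. hi K u (Pu u z)) \<in> borel_measurable borel"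
proof (rule borel_measurableI_ge)
  fix c :: real
  define A1 where "A1 = {z. Pu u z \<in> Pu u ` (K \<inter> {p. c \<le> p \<bullet> u})}"
  define A2 where "A2 = {z. Pu u z \<in> Pu u ` K}"
  have cK: "compact (K \<inter> {p. c \<le> p \<bullet> u})"
    by (rule compact_Int_closed[OF K]) (simp add: closed_Collect_le continuous_on_inner continuous_on_const continuous_on_id)
  have "{x \<in> space borel. c \<le> hi K u (Pu u x)} = A1 \<union> (if c \<le> 0 then - A2 else {})"
  proof (intro set_eqI iffI)
    fix z assume "z \<in> {x \<in> space borel. c \<le> hi K u (Pu u x)}"
    hence z: "c \<le> hi K u (Pu u z)" by simp
    show "z \<in> A1 \<union> (if c \<le> 0 then - A2 else {})"
    proof (cases "fib K u (Pu u z) = {}")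
      case True thus ?thesis using z fib_ne_iff[OF u, of K z] by (auto simp: hi_def A2_def)
    next
      case False
      have cf: "compact (fib K u (Pu u z))" by (rule fib_compact[OF u K])
      have "Sup (fib K u (Pu u z)) \<in> fib K u (Pu u z)"
        by (rule closed_contains_Sup[OF False bounded_imp_bdd_above[OF compact_imp_bounded[OF cf]] compact_imp_closed[OF cf]])
      then obtain t where t: "t \<in> fib K u (Pu u z)" "c \<le> t" using z False by (auto simp: hi_def)
      hence p: "Pu u z + t *\<^sub>R u \<in> K" by (simp add: fib_def)
      have "(Pu u z + t *\<^sub>R u) \<bullet> u = t" using u by (simp add: inner_add_left Pu_orth uu)
      moreover have "Pu u (Pu u z + t *\<^sub>R u) = Pu u z" using u by (simp add: Pu_shift Pu_idem Pu_orth)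
      ultimately have "z \<in> A1" using p t unfolding A1_def by (metis (mono_tags, lifting) IntI image_eqI mem_Collect_eq)
      thus ?thesis by simp
    qed
  next
    fix z assume z: "z \<in> A1 \<union> (if c \<le> 0 then - A2 else {})"
    show "z \<in> {x \<in> space borel. c \<le> hi K u (Pu u x)}"
    proof (cases "z \<in> A1")
      case True
      then obtain p where p: "p \<in> K" "c \<le> p \<bullet> u" "Pu u z = Pu u p" unfolding A1_def by auto
      hence pf: "p \<bullet> u \<in> fib K u (Pu u z)" by (simp add: fib_def Pu_def)
      have "p \<bullet> u \<le> Sup (fib K u (Pu u z))"
        by (rule cSup_upper[OF pf bounded_imp_bdd_above[OF compact_imp_bounded[OF fib_compact[OF u K]]]])
      thus ?thesis using p pf by (auto simp: hi_def)
    next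
      case False
      hence "c \<le> 0" "z \<notin> A2" using z by (auto split: if_splits)
      thus ?thesis using fib_ne_iff[OF u, of K z] by (auto simp: hi_def A2_def)
    qed
  qed
  moreover have "A1 \<in> sets borel" unfolding A1_def by (rule borel_closed[OF cyl_closed_set[OF cK]])
  moreover have "A2 \<in> sets borel" unfolding A2_def by (rule borel_closed[OF cyl_closed_set[OF K]])
  ultimately show "{x \<in> space borel. c \<le> hi K u (Pu u x)} \<in> sets borel" by auto
qed

lemma lo_meas:
  assumes u: "norm u = 1" and K: "compact K"
  shows "(\<lambda>z. lo K u (Pu u z)) \<in> borel_measurable borel"
proof (rule borel_measurableI_le)
  fix c :: real
  define A1 where "A1 = {z. Pu u z \<in> Pu u ` (K \<inter> {p. p \<bullet> u \<le> c})}"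
  define A2 where "A2 = {z. Pu u z \<in> Pu u ` K}"
  have cK: "compact (K \<inter> {p. p \<bullet> u \<le> c})"
    by (rule compact_Int_closed[OF K]) (simp add: closed_Collect_le continuous_on_inner continuous_on_const continuous_on_id)
  have "{x \<in> space borel. lo K u (Pu u x) \<le> c} = A1 \<union> (if 0 \<le> c then - A2 else {})"
  proof (intro set_eqI iffI)
    fix z assume "z \<in> {x \<in> space borel. lo K u (Pu u x) \<le> c}"
    hence z: "lo K u (Pu u z) \<le> c" by simp
    show "z \<in> A1 \<union> (if 0 \<le> c then - A2 else {})"
    proof (cases "fib K u (Pu u z) = {}")
      case True thus ?thesis using z fib_ne_iff[OF u, of K z] by (auto simp: lo_def A2_def)
    next
      case False
      have cf: "compact (fib K u (Pu u z))" by (rule fib_compact[OF u K])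
      have "Inf (fib K u (Pu u z)) \<in> fib K u (Pu u z)"
        by (rule closed_contains_Inf[OF False bounded_imp_bdd_below[OF compact_imp_bounded[OF cf]] compact_imp_closed[OF cf]])
      then obtain t where t: "t \<in> fib K u (Pu u z)" "t \<le> c" using z False by (auto simp: lo_def)
      hence p: "Pu u z + t *\<^sub>R u \<in> K" by (simp add: fib_def)
      have "(Pu u z + t *\<^sub>R u) \<bullet> u = t" using u by (simp add: inner_add_left Pu_orth uu)
      moreover have "Pu u (Pu u z + t *\<^sub>R u) = Pu u z" using u by (simp add: Pu_shift Pu_idem Pu_orth)
      ultimately have "z \<in> A1" using p t unfolding A1_def by (metis (mono_tags, lifting) IntI image_eqI mem_Collect_eq)
      thus ?thesis by simp
    qed
  next
    fix z assume z: "z \<in> A1 \<union> (if 0 \<le> c then - A2 else {})"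
    show "z \<in> {x \<in> space borel. lo K u (Pu u x) \<le> c}"
    proof (cases "z \<in> A1")
      case True
      then obtain p where p: "p \<in> K" "p \<bullet> u \<le> c" "Pu u z = Pu u p" unfolding A1_def by auto
      hence pf: "p \<bullet> u \<in> fib K u (Pu u z)" by (simp add: fib_def Pu_def)
      have "Inf (fib K u (Pu u z)) \<le> p \<bullet> u"
        by (rule cInf_lower[OF pf bounded_imp_bdd_below[OF compact_imp_bounded[OF fib_compact[OF u K]]]])
      thus ?thesis using p pf by (auto simp: lo_def)
    next
      case False
      hence "0 \<le> c" "z \<notin> A2" using z by (auto split: if_splits)
      thus ?thesis using fib_ne_iff[OF u, of K z] by (auto simp: lo_def A2_def)
    qed
  qed
  moreover have "A1 \<in> sets borel" unfolding A1_def by (rule borel_closed[OF cyl_closed_set[OF cK]])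
  moreover have "A2 \<in> sets borel" unfolding A2_def by (rule borel_closed[OF cyl_closed_set[OF K]])
  ultimately show "{x \<in> space borel. lo K u (Pu u x) \<le> c} \<in> sets borel" by auto
qed

lemma gsh_meas:
  assumes u: "norm u = 1" and K: "compact K" and phi: "continuous_on UNIV phi"
  shows "gsh phi K u \<in> borel_measurable borel"
proof -
  have h: "(\<lambda>z. hi K u (Pu u z)) \<in> borel_measurable borel" by (rule hi_meas[OF u K])
  have l: "(\<lambda>z. lo K u (Pu u z)) \<in> borel_measurable borel" by (rule lo_meas[OF u K])
  have p: "phi \<in> borel_measurable borel" by (rule borel_measurable_continuous_onI[OF phi])
  have m: "(\<lambda>z. mid K u (Pu u z)) \<in> borel_measurable borel"
    unfolding mid_def by (intro borel_measurable_divide borel_measurable_add h l borel_measurable_const)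
  have pm: "(\<lambda>z. phi (mid K u (Pu u z))) \<in> borel_measurable borel"
    using measurable_compose[OF m p] by (simp add: comp_def)
  have "(\<lambda>z. phi (mid K u (Pu u z)) - mid K u (Pu u z)) \<in> borel_measurable borel"
    by (rule borel_measurable_diff[OF pm m])
  thus ?thesis by (simp add: gsh_def[abs_def])
qed



definition lip1 :: "(real \<Rightarrow> real) \<Rightarrow> bool" where
  "lip1 phi \<longleftrightarrow> (\<forall>s t. \<bar>phi t - phi s\<bar> \<le> \<bar>t - s\<bar>)"

lemma lip1_cont: "lip1 phi \<Longrightarrow> continuous_on UNIV phi"
  by (rule lipschitz_on_continuous_on[of 1])
     (auto simp: lipschitz_on_def lip1_def dist_real_def)

lemma cbD: "convex_body K \<Longrightarrow> compact K \<and> convex K"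
  by (simp add: convex_body_def)

lemma ae_eq_refl: "ae_eq A A" by (simp add: ae_eq_def ae_subset_refl)

lemma fib_cball:
  assumes u: "norm u = 1" and y: "y \<bullet> u = 0" and r: "norm (y - Pu u c) \<le> r"
  defines "w \<equiv> sqrt (r^2 - norm (y - Pu u c)^2)"
  shows "fib (cball c r) u y = {c \<bullet> u - w .. c \<bullet> u + w}"
proof -
  have "norm (y - Pu u c) ^ 2 \<le> r ^ 2" using power_mono[OF r norm_ge_zero] .
  hence nn: "0 \<le> r^2 - norm (y - Pu u c)^2" by linarith
  hence w0: "w \<ge> 0" by (simp add: w_def)
  from nn have w2: "w ^ 2 = r^2 - norm (y - Pu u c)^2" unfolding w_def by (rule real_sqrt_pow2)
  have r0: "r \<ge> 0" using r norm_ge_zero order_trans by blast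
  have orth: "(y - Pu u c) \<bullet> u = 0" using y Pu_orth[OF u] by (simp add: inner_diff_left)
  have "t \<in> fib (cball c r) u y \<longleftrightarrow> t \<in> {c \<bullet> u - w .. c \<bullet> u + w}" for t
  proof -
    have e: "y + t *\<^sub>R u - c = (y - Pu u c) + (t - c \<bullet> u) *\<^sub>R u" by (simp add: Pu_def algebra_simps)
    have "t \<in> fib (cball c r) u y \<longleftrightarrow> norm (y + t *\<^sub>R u - c) \<le> r"
      by (simp add: fib_def dist_norm norm_minus_commute)
    also have "\<dots> \<longleftrightarrow> norm (y + t *\<^sub>R u - c) ^ 2 \<le> r ^ 2"
      using r0 by (simp add: abs_le_square_iff[symmetric])
    also have "\<dots> \<longleftrightarrow> norm (y - Pu u c) ^ 2 + (t - c \<bullet> u) ^ 2 \<le> r ^ 2"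
      unfolding e pyth[OF u orth] ..
    also have "\<dots> \<longleftrightarrow> (t - c \<bullet> u) ^ 2 \<le> w ^ 2" using w2 by linarith
    also have "\<dots> \<longleftrightarrow> \<bar>t - c \<bullet> u\<bar> \<le> w" using w0 by (simp add: abs_le_square_iff[symmetric])
    also have "\<dots> \<longleftrightarrow> t \<in> {c \<bullet> u - w .. c \<bullet> u + w}" by auto
    finally show ?thesis .
  qed
  thus ?thesis by blast
qed

lemma fib_cball_empty:
  assumes u: "norm u = 1" and y: "y \<bullet> u = 0" and r: "\<not> norm (y - Pu u c) \<le> r"
  shows "fib (cball c r) u y = {}"
proof -
  have orth: "(y - Pu u c) \<bullet> u = 0" using y Pu_orth[OF u] by (simp add: inner_diff_left)
  have "norm (y + t *\<^sub>R u - c) > r" for t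
  proof -
    have e: "y + t *\<^sub>R u - c = (y - Pu u c) + (t - c \<bullet> u) *\<^sub>R u" by (simp add: Pu_def algebra_simps)
    have "norm (y - Pu u c) ^ 2 \<le> norm (y + t *\<^sub>R u - c) ^ 2" unfolding e pyth[OF u orth] by simp
    hence "norm (y - Pu u c) \<le> norm (y + t *\<^sub>R u - c)" by (simp add: abs_le_square_iff[symmetric])
    thus ?thesis using r by simp
  qed
  hence "y + t *\<^sub>R u \<notin> cball c r" for t by (simp add: dist_norm norm_minus_commute not_le)
  thus ?thesis unfolding fib_def by blast
qed

lemma Dphi_cball:
  assumes u: "norm u = 1" and r: "r > 0"
  shows "Dphi u phi (cball c r) = cball (Pu u c + phi (c \<bullet> u) *\<^sub>R u) r"
proof (intro set_eqI)
  fix z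
  let ?y = "Pu u z"
  have y: "?y \<bullet> u = 0" by (rule Pu_orth[OF u])
  have orth: "(?y - Pu u c) \<bullet> u = 0" using y Pu_orth[OF u] by (simp add: inner_diff_left)
  have e: "z - (Pu u c + phi (c \<bullet> u) *\<^sub>R u) = (?y - Pu u c) + (z \<bullet> u - phi (c \<bullet> u)) *\<^sub>R u"
    by (simp add: Pu_def algebra_simps)
  have rhs: "z \<in> cball (Pu u c + phi (c \<bullet> u) *\<^sub>R u) r \<longleftrightarrow>
      norm (?y - Pu u c) ^ 2 + (z \<bullet> u - phi (c \<bullet> u)) ^ 2 \<le> r ^ 2"
  proof -
    have "z \<in> cball (Pu u c + phi (c \<bullet> u) *\<^sub>R u) r \<longleftrightarrow> norm (z - (Pu u c + phi (c \<bullet> u) *\<^sub>R u)) \<le> r"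
      by (simp add: dist_norm norm_minus_commute)
    also have "\<dots> \<longleftrightarrow> norm (z - (Pu u c + phi (c \<bullet> u) *\<^sub>R u)) ^ 2 \<le> r ^ 2"
      using r by (simp add: abs_le_square_iff[symmetric])
    finally show ?thesis unfolding e pyth[OF u orth] .
  qed
  have cK: "compact (cball c r)" "convex (cball c r)" by auto
  show "z \<in> Dphi u phi (cball c r) \<longleftrightarrow> z \<in> cball (Pu u c + phi (c \<bullet> u) *\<^sub>R u) r"
  proof (cases "norm (?y - Pu u c) \<le> r")
    case True
    define w where "w = sqrt (r^2 - norm (?y - Pu u c)^2)"
    have "norm (?y - Pu u c) ^ 2 \<le> r ^ 2" using power_mono[OF True norm_ge_zero] .
    hence nn: "0 \<le> r^2 - norm (?y - Pu u c)^2" by linarith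
    hence w0: "w \<ge> 0" by (simp add: w_def)
    from nn have w2: "w ^ 2 = r^2 - norm (?y - Pu u c)^2" unfolding w_def by (rule real_sqrt_pow2)
    have f: "fib (cball c r) u ?y = {c \<bullet> u - w .. c \<bullet> u + w}"
      unfolding w_def by (rule fib_cball[OF u y True])
    have ne: "fib (cball c r) u ?y \<noteq> {}" using f w0 by auto
    have lh: "lo (cball c r) u ?y = c \<bullet> u - w" "hi (cball c r) u ?y = c \<bullet> u + w"
      using f ne w0 by (auto simp: lo_def hi_def)
    have mh: "mid (cball c r) u ?y = c \<bullet> u" "hh (cball c r) u ?y = w"
      using lh by (auto simp: mid_def hh_def)
    have "z \<in> Dphi u phi (cball c r) \<longleftrightarrow> \<bar>z \<bullet> u - phi (c \<bullet> u)\<bar> \<le> w"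
      using Dphi_mem[OF u cK, of z phi] ne mh by simp
    also have "\<dots> \<longleftrightarrow> (z \<bullet> u - phi (c \<bullet> u)) ^ 2 \<le> w ^ 2"
      using w0 by (simp add: abs_le_square_iff[symmetric])
    also have "\<dots> \<longleftrightarrow> z \<in> cball (Pu u c + phi (c \<bullet> u) *\<^sub>R u) r"
      unfolding rhs w2 by linarith
    finally show ?thesis .
  next
    case False
    have "fib (cball c r) u ?y = {}" by (rule fib_cball_empty[OF u y False])
    hence "z \<notin> Dphi u phi (cball c r)" using Dphi_mem[OF u cK, of z phi] by simp
    moreover have "\<not> norm (?y - Pu u c) ^ 2 \<le> r ^ 2"
      using False r by (simp add: abs_le_square_iff[symmetric])
    hence "z \<notin> cball (Pu u c + phi (c \<bullet> u) *\<^sub>R u) r" unfolding rhs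
      using zero_le_power2[of "z \<bullet> u - phi (c \<bullet> u)"] by linarith
    ultimately show ?thesis by simp
  qed
qed

lemma hcyl_char:
  assumes u: "norm u = 1"
  shows "hcyl u t0 x r = {p. p - (p \<bullet> u - t0) *\<^sub>R u \<in> cball x r}"
proof (intro set_eqI iffI)
  fix p assume "p \<in> hcyl u t0 x r"
  then obtain z s where zs: "p = z + s *\<^sub>R u" "z \<in> cball x r" "z \<bullet> u = t0"
    by (auto simp: hcyl_def hyperplane_def)
  have "p \<bullet> u = t0 + s" using zs u by (simp add: inner_add_left uu)
  hence eq: "p - (p \<bullet> u - t0) *\<^sub>R u = z" using zs(1) by simp
  have "p - (p \<bullet> u - t0) *\<^sub>R u \<in> cball x r" unfolding eq by (rule zs(2))
  thus "p \<in> {p. p - (p \<bullet> u - t0) *\<^sub>R u \<in> cball x r}" by simp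
next
  fix p assume p: "p \<in> {p. p - (p \<bullet> u - t0) *\<^sub>R u \<in> cball x r}"
  define z where "z = p - (p \<bullet> u - t0) *\<^sub>R u"
  have "z \<bullet> u = t0" using u by (simp add: z_def inner_diff_left uu)
  moreover have "p = z + (p \<bullet> u - t0) *\<^sub>R u" by (simp add: z_def)
  ultimately show "p \<in> hcyl u t0 x r" using p unfolding hcyl_def hyperplane_def z_def by blast
qed

lemma hcyl_closed:
  assumes u: "norm u = 1" shows "closed (hcyl u t0 x r)"
proof -
  have "hcyl u t0 x r = (\<lambda>p. p - (p \<bullet> u - t0) *\<^sub>R u) -` cball x r"
    unfolding hcyl_char[OF u] by auto
  moreover have "closed ((\<lambda>p. p - (p \<bullet> u - t0) *\<^sub>R u) -` cball x r)"
    by (rule continuous_closed_vimage[OF closed_cball]) (intro continuous_intros)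
  ultimately show ?thesis by simp
qed

lemma hcyl_shift: "norm u = 1 \<Longrightarrow> p + a *\<^sub>R u \<in> hcyl u t0 x r \<longleftrightarrow> p \<in> hcyl u t0 x r"
  by (simp add: hcyl_char inner_add_left uu algebra_simps)

lemma cb_ae_subset_closed:
  assumes K: "convex_body K" and C: "closed C" and ae: "ae_subset K C"
  shows "K \<subseteq> C"
proof -
  have "interior K - C \<subseteq> K - C" using interior_subset by blast
  hence "interior K - C \<in> null_sets lebesgue" using ae null_subset by (auto simp: ae_subset_def)
  hence "negligible (interior K - C)" using negligible_iff_null_sets by blast
  moreover have "open (interior K - C)" using C by auto
  ultimately have "interior K - C = {}" using open_not_negligible by blast
  hence "interior K \<subseteq> C" by blast
  hence "closure (interior K) \<subseteq> C" using C by (simp add: closure_minimal)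
  moreover have "closure (interior K) = K"
    using K convex_closure_interior[of K] compact_imp_closed[of K] closure_closed[of K]
    by (auto simp: convex_body_def)
  ultimately show ?thesis by simp
qed

lemma mono_arith:
  fixes a b a' b' s P Q :: real
  assumes "\<bar>s - P\<bar> \<le> (b - a) / 2" "a' \<le> a" "b \<le> b'" "\<bar>P - Q\<bar> \<le> \<bar>(a + b) / 2 - (a' + b') / 2\<bar>"
  shows "\<bar>s - Q\<bar> \<le> (b' - a') / 2"
proof -
  have h1: "\<bar>(a + b) / 2 - (a' + b') / 2\<bar> \<le> ((a - a') + (b' - b)) / 2"
    using assms(2,3) by (simp add: abs_le_iff field_simps)
  have h2: "\<bar>s - Q\<bar> \<le> \<bar>s - P\<bar> + \<bar>P - Q\<bar>" using abs_triangle_ineq[of "s - P" "P - Q"] by simp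
  have h3: "\<bar>s - Q\<bar> \<le> (b - a) / 2 + ((a - a') + (b' - b)) / 2" using h1 h2 assms(1,4) by linarith
  show ?thesis using h3 by (simp add: field_simps)
qed

lemma Dphi_mono:
  assumes u: "norm u = 1" and lip: "lip1 phi" and K: "compact K" "convex K" and L: "compact L" "convex L"
    and KL: "K \<subseteq> L"
  shows "Dphi u phi K \<subseteq> Dphi u phi L"
proof
  fix z assume z: "z \<in> Dphi u phi K"
  let ?y = "Pu u z"
  have neK: "fib K u ?y \<noteq> {}" and zK: "\<bar>z \<bullet> u - phi (mid K u ?y)\<bar> \<le> hh K u ?y"
    using z Dphi_mem[OF u K] by auto
  have sub: "fib K u ?y \<subseteq> fib L u ?y" using KL by (auto simp: fib_def)
  hence neL: "fib L u ?y \<noteq> {}" using neK by auto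
  note iK = fib_interval[OF u K neK] and iL = fib_interval[OF u L neL]
  have b: "lo L u ?y \<le> lo K u ?y" "hi K u ?y \<le> hi L u ?y" using sub iK iL by auto
  have "\<bar>phi (mid K u ?y) - phi (mid L u ?y)\<bar> \<le> \<bar>mid K u ?y - mid L u ?y\<bar>"
    using lip by (simp add: lip1_def)
  hence "\<bar>z \<bullet> u - phi (mid L u ?y)\<bar> \<le> hh L u ?y"
    using mono_arith[OF _ b] zK unfolding mid_def hh_def by blast
  thus "z \<in> Dphi u phi L" using Dphi_mem[OF u L] neL by auto
qed

lemma Dphi_meas:
  assumes u: "norm u = 1" and lip: "lip1 phi" and K: "compact K" "convex K"
  shows "Dphi u phi K \<in> sets borel" "emeasure lebesgue (Dphi u phi K) = emeasure lebesgue K"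
  unfolding Dphi_def
  by (rule S2[OF u gsh_meas[OF u K(1) lip1_cont[OF lip]] uinv_gsh[OF u] K])+

lemma Dphi_JH:
  assumes u: "norm u = 1" and lip: "lip1 phi"
  shows "Dphi u phi \<in> JH u t0"
  unfolding JH_def
proof (intro CollectI conjI allI impI)
  fix K :: "'a set" assume K: "convex_body K"
  note KK = cbD[OF K]
  have "K \<in> lmeasurable" using KK lmeasurable_compact by blast
  thus "fin_meas (Dphi u phi K)"
    using Dphi_meas[OF u lip, of K] KK borel_lebesgue by (auto simp: fin_meas_def fmeasurable_def)
  show "emeasure lebesgue (Dphi u phi K) = emeasure lebesgue K"
    using Dphi_meas[OF u lip, of K] KK by auto
next
  fix K L :: "'a set" assume "convex_body K \<and> convex_body L \<and> K \<subseteq> L"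
  thus "ae_subset (Dphi u phi K) (Dphi u phi L)"
    using Dphi_mono[OF u lip] cbD subset_ae_subset by metis
next
  fix x :: 'a and r :: real assume r: "r > 0"
  show "\<exists>y s. s > 0 \<and> ae_eq (Dphi u phi (cball x r)) (cball y s)"
    using Dphi_cball[OF u r] r ae_eq_refl by metis
next
  fix A :: "'a set" and x r
  assume a: "convex_body A \<and> r > 0 \<and> ae_subset A (hcyl u t0 x r)"
  have AC: "A \<subseteq> hcyl u t0 x r" using a cb_ae_subset_closed hcyl_closed[OF u] by blast
  have "Dphi u phi A \<subseteq> hcyl u t0 x r"
  proof
    fix z assume "z \<in> Dphi u phi A"
    hence "z - gsh phi A u z *\<^sub>R u \<in> hcyl u t0 x r" using AC by (auto simp: Dphi_def Sh_def)
    thus "z \<in> hcyl u t0 x r" using hcyl_shift[OF u, of "z - gsh phi A u z *\<^sub>R u" "gsh phi A u z"] by simp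
  qed
  thus "ae_subset (Dphi u phi A) (hcyl u t0 x r)" by (rule subset_ae_subset)
qed

lemma Dphi_assoc:
  assumes u: "norm u = 1"
  shows "assoc_contraction u (Dphi u phi) phi"
  unfolding assoc_contraction_def
proof (intro allI impI)
  fix x :: 'a and t r :: real assume a: "x \<bullet> u = 0 \<and> r > 0"
  have "Pu u (x + t *\<^sub>R u) = x" using a u by (simp add: Pu_shift Pu_idem)
  moreover have "(x + t *\<^sub>R u) \<bullet> u = t" using a u by (simp add: inner_add_left uu)
  ultimately show "ae_eq (Dphi u phi (cball (x + t *\<^sub>R u) r)) (cball (x + phi t *\<^sub>R u) r)"
    using Dphi_cball[OF u, of r phi "x + t *\<^sub>R u"] a ae_eq_refl by simp
qed



lemma JH_fin: assumes "D \<in> JH u t0" "convex_body K" shows "D K \<in> lmeasurable"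
  using assms unfolding JH_def fin_meas_def fmeasurable_def mem_Collect_eq by blast
lemma JH_mono: "D \<in> JH u t0 \<Longrightarrow> convex_body K \<Longrightarrow> convex_body L \<Longrightarrow> K \<subseteq> L \<Longrightarrow> ae_subset (D K) (D L)"
  by (simp add: JH_def)
lemma JH_em: "D \<in> JH u t0 \<Longrightarrow> convex_body K \<Longrightarrow> emeasure lebesgue (D K) = emeasure lebesgue K"
  by (simp add: JH_def)

lemma cb_lmeas: "convex_body K \<Longrightarrow> K \<in> lmeasurable"
  by (simp add: convex_body_def lmeasurable_compact)

lemma JH_measure: "D \<in> JH u t0 \<Longrightarrow> convex_body K \<Longrightarrow> measure lebesgue (D K) = measure lebesgue K"
  by (simp add: measure_def JH_em)

lemma assoc_ball:
  assumes u: "norm u = 1" and ac: "assoc_contraction u D phi" and r: "r > 0" and x: "x \<bullet> u = 0"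
  shows "ae_eq (D (cball (x + t *\<^sub>R u) r)) (cball (x + phi t *\<^sub>R u) r)"
  using ac x r unfolding assoc_contraction_def by blast

lemma CH_eps:
  fixes u :: "'a::euclidean_space"
  assumes u: "norm u = 1" and D: "D \<in> JH u t0" and ac: "assoc_contraction u D phi"
    and K: "convex_body K" and vu: "v \<bullet> u = 0" and Kv: "K \<subseteq> {z. v \<bullet> z \<le> c}" and e: "\<epsilon> > 0"
  shows "ae_subset (D K) {z. v \<bullet> z \<le> c + \<epsilon>}"
proof (cases "v = 0")
  case True
  have "K \<noteq> {}" using K by (auto simp: convex_body_def)
  then obtain p where "p \<in> K" by auto
  hence "v \<bullet> p \<le> c" using Kv by auto
  hence "0 \<le> c" using True by simp
  hence "{z. v \<bullet> z \<le> c + \<epsilon>} = UNIV" using True e by auto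
  thus ?thesis by (simp add: ae_subset_def)
next
  case False
  define n where "n = norm v"
  have n: "n > 0" using False by (simp add: n_def)
  define w where "w = (1 / n) *\<^sub>R v"
  have w1: "norm w = 1" using n by (simp add: w_def n_def)
  have ww: "w \<bullet> w = 1" using w1 by (simp add: dot_square_norm)
  have wu: "w \<bullet> u = 0" using vu by (simp add: w_def)
  have vw: "v \<bullet> z = n * (w \<bullet> z)" for z using n by (simp add: w_def)
  obtain R0 where R0: "\<And>p. p \<in> K \<Longrightarrow> norm p \<le> R0"
    using compact_imp_bounded[of K] K by (auto simp: convex_body_def bounded_iff)
  define R where "R = max R0 0"
  have R: "\<And>p. p \<in> K \<Longrightarrow> norm p \<le> R" "R \<ge> 0" using R0 by (auto simp: R_def intro: le_max_iff_disj[THEN iffD2])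
  define Dd where "Dd = \<bar>c + \<epsilon>\<bar> / n + R"
  define \<rho> where "\<rho> = R^2 * n / (2 * \<epsilon>) + Dd / 2 + 1"
  have Dd0: "Dd \<ge> 0" using R n by (simp add: Dd_def)
  have "R^2 * n / (2 * \<epsilon>) \<ge> 0" using n e by simp
  hence \<rho>0: "\<rho> > 0" using Dd0 unfolding \<rho>_def by linarith
  define \<beta> where "\<beta> = (c + \<epsilon>) / n - \<rho>"
  define x where "x = \<beta> *\<^sub>R w"
  have xu: "x \<bullet> u = 0" using wu by (simp add: x_def)
  have KB: "K \<subseteq> cball (x + 0 *\<^sub>R u) \<rho>"
  proof
    fix p assume p: "p \<in> K"
    define \<alpha> where "\<alpha> = w \<bullet> p"
    have a1: "\<alpha> \<le> c / n" using Kv p vw[of p] n by (auto simp: \<alpha>_def field_simps)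
    have "\<bar>\<alpha>\<bar> \<le> norm p" unfolding \<alpha>_def using Cauchy_Schwarz_ineq2[of w p] w1 by simp
    hence a2: "\<bar>\<alpha>\<bar> \<le> R" using R(1)[OF p] by simp
    define d where "d = (c + \<epsilon>) / n - \<alpha>"
    have d1: "d \<ge> \<epsilon> / n" using a1 by (simp add: d_def diff_divide_distrib[symmetric] add_divide_distrib)
    have dpos: "d > 0" using d1 e n by (meson divide_pos_pos order_less_le_trans)
    have "(c + \<epsilon>) / n \<le> \<bar>c + \<epsilon>\<bar> / n" using n by (simp add: divide_right_mono)
    hence d2: "d \<le> Dd" unfolding d_def Dd_def using a2 by (simp add: abs_le_iff)
    have np: "norm (p - x) ^ 2 = norm p ^ 2 - 2 * \<beta> * \<alpha> + \<beta> ^ 2"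
      unfolding power2_norm_eq_inner x_def \<alpha>_def
      by (simp add: inner_diff_left inner_diff_right ww inner_commute power2_eq_square algebra_simps)
    have nd: "n * d \<ge> \<epsilon>" using d1 n by (simp add: field_simps)
    have t1: "R^2 * n / (2 * \<epsilon>) * (2 * d) \<ge> R^2"
    proof -
      have "R^2 * n / (2 * \<epsilon>) * (2 * d) = R^2 * ((n * d) / \<epsilon>)" using e by (simp add: field_simps)
      also have "\<dots> \<ge> R^2 * 1" using nd e by (intro mult_left_mono) (auto simp: field_simps)
      finally show ?thesis by simp
    qed
    have t2: "Dd * d \<ge> d * d" using d2 dpos by (simp add: mult_right_mono)
    have key: "R^2 + d^2 \<le> 2 * \<rho> * d"
    proof -
      have "2 * \<rho> * d = R^2 * n / (2 * \<epsilon>) * (2 * d) + Dd * d + 2 * d" by (simp add: \<rho>_def algebra_simps)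
      moreover have "d^2 = d * d" by (simp add: power2_eq_square)
      ultimately show ?thesis using t1 t2 dpos by linarith
    qed
    have "norm p ^ 2 \<le> R ^ 2" using R(1)[OF p] by (simp add: power_mono)
    moreover have "\<alpha> - \<beta> = \<rho> - d" by (simp add: \<beta>_def d_def)
    ultimately have "norm (p - x) ^ 2 \<le> \<rho> ^ 2"
    proof -
      assume h1: "norm p ^ 2 \<le> R ^ 2" and h2: "\<alpha> - \<beta> = \<rho> - d"
      have e1: "norm p ^ 2 - 2 * \<beta> * \<alpha> + \<beta> ^ 2 = norm p ^ 2 - \<alpha> ^ 2 + (\<alpha> - \<beta>) ^ 2"
        by (simp add: power2_eq_square algebra_simps)
      have e3: "(\<rho> - d) ^ 2 = \<rho> ^ 2 - 2 * \<rho> * d + d ^ 2" by (simp add: power2_eq_square algebra_simps)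
      have e2: "(\<alpha> - \<beta>) ^ 2 = (\<rho> - d) ^ 2" using h2 by simp
      have "\<alpha> ^ 2 \<ge> 0" by simp
      thus ?thesis using np e1 e2 e3 h1 key by linarith
    qed
    hence "norm (p - x) \<le> \<rho>" using \<rho>0 by (simp add: abs_le_square_iff[symmetric])
    thus "p \<in> cball (x + 0 *\<^sub>R u) \<rho>" by (simp add: dist_norm norm_minus_commute)
  qed
  have cbB: "convex_body (cball (x + 0 *\<^sub>R u) \<rho>)" using \<rho>0 by (rule convex_body_cball)
  have m1: "ae_subset (D K) (D (cball (x + 0 *\<^sub>R u) \<rho>))" by (rule JH_mono[OF D K cbB KB])
  have m2: "ae_subset (D (cball (x + 0 *\<^sub>R u) \<rho>)) (cball (x + phi 0 *\<^sub>R u) \<rho>)"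
    using assoc_ball[OF u ac \<rho>0 xu, of 0] by (simp add: ae_eq_def)
  have m3: "cball (x + phi 0 *\<^sub>R u) \<rho> \<subseteq> {z. v \<bullet> z \<le> c + \<epsilon>}"
  proof
    fix q assume q: "q \<in> cball (x + phi 0 *\<^sub>R u) \<rho>"
    have "w \<bullet> (q - (x + phi 0 *\<^sub>R u)) \<le> norm (q - (x + phi 0 *\<^sub>R u))"
      using Cauchy_Schwarz_ineq2[of w "q - (x + phi 0 *\<^sub>R u)"] w1 by simp
    also have "\<dots> \<le> \<rho>" using q by (simp add: dist_norm norm_minus_commute)
    finally have "w \<bullet> q - \<beta> \<le> \<rho>" using wu ww by (simp add: x_def inner_diff_right inner_add_right)
    hence "w \<bullet> q \<le> (c + \<epsilon>) / n" by (simp add: \<beta>_def)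
    hence "n * (w \<bullet> q) \<le> c + \<epsilon>" using n by (simp add: field_simps)
    thus "q \<in> {z. v \<bullet> z \<le> c + \<epsilon>}" using vw by simp
  qed
  show ?thesis by (rule ae_subset_trans[OF m1 ae_subset_trans[OF m2 subset_ae_subset[OF m3]]])
qed

lemma CH:
  fixes u :: "'a::euclidean_space"
  assumes u: "norm u = 1" and D: "D \<in> JH u t0" and ac: "assoc_contraction u D phi"
    and K: "convex_body K" and vu: "v \<bullet> u = 0" and Kv: "K \<subseteq> {z. v \<bullet> z \<le> c}"
  shows "ae_subset (D K) {z. v \<bullet> z \<le> c}"
proof -
  have n: "D K - {z. v \<bullet> z \<le> c + 1 / real (Suc j)} \<in> null_sets lebesgue" for j
    using CH_eps[OF u D ac K vu Kv, of "1 / real (Suc j)"] by (simp add: ae_subset_def)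
  have "D K - {z. v \<bullet> z \<le> c} \<subseteq> (\<Union>j. D K - {z. v \<bullet> z \<le> c + 1 / real (Suc j)})"
  proof
    fix z assume z: "z \<in> D K - {z. v \<bullet> z \<le> c}"
    hence "v \<bullet> z - c > 0" by simp
    then obtain j where "inverse (real (Suc j)) < v \<bullet> z - c" using reals_Archimedean by blast
    hence "\<not> v \<bullet> z \<le> c + 1 / real (Suc j)" by (simp add: inverse_eq_divide)
    thus "z \<in> (\<Union>j. D K - {z. v \<bullet> z \<le> c + 1 / real (Suc j)})" using z by blast
  qed
  moreover have "(\<Union>j. D K - {z. v \<bullet> z \<le> c + 1 / real (Suc j)}) \<in> null_sets lebesgue"
    using n by blast
  ultimately show ?thesis unfolding ae_subset_def by (rule null_subset)
qed

lemma cb_open_meets_interior: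
  assumes K: "convex_body K" and Uo: "open W" and ne: "K \<inter> W \<noteq> {}"
  shows "interior K \<inter> W \<noteq> {}"
proof -
  obtain p where p: "p \<in> K" "p \<in> W" using ne by auto
  obtain e where e: "e > 0" "ball p e \<subseteq> W" using Uo p(2) open_contains_ball by blast
  have "closure (interior K) = K"
    using K convex_closure_interior[of K] compact_imp_closed[of K] closure_closed[of K]
    by (auto simp: convex_body_def)
  hence "p \<in> closure (interior K)" using p by simp
  then obtain q where q: "q \<in> interior K" "dist q p < e" using e closure_approachable by blast
  hence "q \<in> W" using e by (auto simp: dist_commute)
  thus ?thesis using q by auto
qed

lemma cb_Int_halfspace:
  assumes K: "convex_body K" and ne: "K \<inter> {z. v \<bullet> z < c} \<noteq> {}"
  shows "convex_body (K \<inter> {z. v \<bullet> z \<le> c})"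
proof -
  have o: "open {z. v \<bullet> z < c}" by (simp add: open_halfspace_lt)
  have "interior K \<inter> {z. v \<bullet> z < c} \<noteq> {}" by (rule cb_open_meets_interior[OF K o ne])
  moreover have "interior K \<inter> {z. v \<bullet> z < c} \<subseteq> interior (K \<inter> {z. v \<bullet> z \<le> c})"
    by (rule interior_maximal) (use interior_subset o in auto)
  ultimately have "interior (K \<inter> {z. v \<bullet> z \<le> c}) \<noteq> {}" by blast
  moreover have "compact (K \<inter> {z. v \<bullet> z \<le> c})"
    using K by (auto simp: convex_body_def intro!: compact_Int_closed closed_halfspace_le)
  moreover have "convex (K \<inter> {z. v \<bullet> z \<le> c})"
    using K by (auto simp: convex_body_def intro!: convex_Int convex_halfspace_le)
  ultimately show ?thesis by (simp add: convex_body_def)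
qed

lemma null_from_measure0:
  assumes "X \<in> lmeasurable" "measure lebesgue X = 0"
  shows "X \<in> null_sets lebesgue"
proof -
  have "emeasure lebesgue X = ennreal (measure lebesgue X)"
    by (rule emeasure_eq_ennreal_measure[OF fmeasurableD2[OF assms(1)]])
  hence "emeasure lebesgue X = 0" using assms(2) by simp
  thus ?thesis using fmeasurableD[OF assms(1)] by (rule null_setsI)
qed

lemma HS:
  fixes u :: "'a::euclidean_space"
  assumes u: "norm u = 1" and D: "D \<in> JH u t0" and ac: "assoc_contraction u D phi"
    and K: "convex_body K" and vu: "v \<bullet> u = 0" and KS: "convex_body (K \<inter> {z. v \<bullet> z \<le> c})"
  shows "D K \<inter> {z. v \<bullet> z < c} - D (K \<inter> {z. v \<bullet> z \<le> c}) \<in> null_sets lebesgue"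
proof (cases "K \<subseteq> {z. v \<bullet> z \<le> c}")
  case True
  hence "K \<inter> {z. v \<bullet> z \<le> c} = K" by blast
  hence e: "D K \<inter> {z. v \<bullet> z < c} - D (K \<inter> {z. v \<bullet> z \<le> c}) = {}" by auto
  show ?thesis unfolding e by simp
next
  case False
  define S where "S = {z. v \<bullet> z \<le> c}"
  define S' where "S' = {z. (- v) \<bullet> z \<le> - c}"
  have S'e: "S' = {z. v \<bullet> z \<ge> c}" by (auto simp: S'_def)
  have vne: "v \<noteq> 0"
  proof
    assume v0: "v = 0"
    show False
    proof (cases "0 \<le> c")
      case True thus False using False v0 by auto
    next
      case c: False
      hence "K \<inter> {z. v \<bullet> z \<le> c} = {}" using v0 by auto
      thus False using KS by (simp add: convex_body_def)
    qed
  qed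
  have ne': "K \<inter> {z. (- v) \<bullet> z < - c} \<noteq> {}" using False by auto
  have KS': "convex_body (K \<inter> S')" unfolding S'_def by (rule cb_Int_halfspace[OF K ne'])
  have KS1: "convex_body (K \<inter> S)" using KS by (simp add: S_def)
  define A where "A = D K"
  define A1 where "A1 = D (K \<inter> S)"
  define A2 where "A2 = D (K \<inter> S')"
  define X where "X = A \<inter> {z. v \<bullet> z < c} - A1"
  have Am: "A \<in> lmeasurable" "A1 \<in> lmeasurable" "A2 \<in> lmeasurable"
    unfolding A_def A1_def A2_def using JH_fin[OF D] K KS1 KS' by auto
  have Xm: "X \<in> lmeasurable" unfolding X_def
    using Am by (intro fmeasurable_Diff fmeasurable_Int_fmeasurable) (auto simp: open_halfspace_lt borel_open borel_lebesgue fmeasurableD)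
  have a1: "A1 - A \<in> null_sets lebesgue" using JH_mono[OF D KS1 K] by (auto simp: A1_def A_def ae_subset_def)
  have a2: "A2 - A \<in> null_sets lebesgue" using JH_mono[OF D KS' K] by (auto simp: A2_def A_def ae_subset_def)
  have s1: "A1 - S \<in> null_sets lebesgue"
    using CH[OF u D ac KS1 vu, of c] by (auto simp: A1_def S_def ae_subset_def)
  have s2: "A2 - S' \<in> null_sets lebesgue"
    using CH[OF u D ac KS', of "- v" "- c"] vu by (auto simp: A2_def S'_def ae_subset_def)
  have hyp: "{z. v \<bullet> z = c} \<in> null_sets lebesgue"
    using negligible_hyperplane[of v c] vne negligible_iff_null_sets by blast
  have Kmeas: "measure lebesgue (K \<inter> S) + measure lebesgue (K \<inter> S') = measure lebesgue K"
  proof -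
    have "measure lebesgue ((K \<inter> S) \<union> (K \<inter> S')) = measure lebesgue (K \<inter> S) + measure lebesgue (K \<inter> S')"
    proof (rule measure_Un_AE)
      show "K \<inter> S \<in> lmeasurable" "K \<inter> S' \<in> lmeasurable" using KS1 KS' cb_lmeas by auto
      show "AE x in lebesgue. x \<notin> K \<inter> S \<or> x \<notin> K \<inter> S'"
        by (rule AE_I'[OF hyp]) (auto simp: S_def S'e)
    qed
    moreover have "(K \<inter> S) \<union> (K \<inter> S') = K" by (auto simp: S_def S'e)
    ultimately show ?thesis by simp
  qed
  have eqA: "measure lebesgue A1 + measure lebesgue A2 = measure lebesgue A"
    using Kmeas JH_measure[OF D] K KS1 KS' by (simp add: A_def A1_def A2_def)
  define N where "N = (A1 - A) \<union> (A2 - A) \<union> (A1 - S) \<union> (A2 - S') \<union> {z. v \<bullet> z = c}"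
  have Nn: "N \<in> null_sets lebesgue" unfolding N_def using a1 a2 s1 s2 hyp by auto
  have u2: "measure lebesgue (A1 \<union> A2) = measure lebesgue A1 + measure lebesgue A2"
  proof (rule measure_Un_AE)
    show "A1 \<in> lmeasurable" "A2 \<in> lmeasurable" using Am by auto
    show "AE x in lebesgue. x \<notin> A1 \<or> x \<notin> A2"
      by (rule AE_I'[OF Nn]) (auto simp: N_def S_def S'e)
  qed
  have u3: "measure lebesgue (A1 \<union> A2 \<union> X) = measure lebesgue A1 + measure lebesgue A2 + measure lebesgue X"
  proof -
    have "measure lebesgue ((A1 \<union> A2) \<union> X) = measure lebesgue (A1 \<union> A2) + measure lebesgue X"
    proof (rule measure_Un_AE)
      show "A1 \<union> A2 \<in> lmeasurable" "X \<in> lmeasurable" using Am Xm by auto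
      show "AE x in lebesgue. x \<notin> A1 \<union> A2 \<or> x \<notin> X"
        by (rule AE_I'[OF Nn]) (auto simp: N_def X_def S'e)
    qed
    thus ?thesis using u2 by simp
  qed
  have "measure lebesgue (A1 \<union> A2 \<union> X) \<le> measure lebesgue (A \<union> N)"
  proof (rule measure_mono_fmeasurable)
    show "A1 \<union> A2 \<union> X \<subseteq> A \<union> N" by (auto simp: N_def X_def)
    show "A1 \<union> A2 \<union> X \<in> sets lebesgue" using Am Xm by (auto simp: fmeasurable_def)
    show "A \<union> N \<in> fmeasurable lebesgue"
      by (rule fmeasurable.Un[OF Am(1) fmeasurableI_null_sets[OF Nn]])
  qed
  also have "\<dots> = measure lebesgue A" using Am Nn by (intro measure_Un_null_set) (auto simp: fmeasurable_def)
  finally have "measure lebesgue X \<le> 0" using u3 eqA by simp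
  hence "measure lebesgue X = 0" using measure_nonneg[of lebesgue X] by linarith
  hence "X \<in> null_sets lebesgue" using Xm null_from_measure0 by blast
  thus ?thesis by (simp add: X_def A_def A1_def S_def)
qed

lemma poly:
  fixes u :: "'a::euclidean_space" and V :: "('a \<times> real) set"
  assumes u: "norm u = 1" and D: "D \<in> JH u t0" and ac: "assoc_contraction u D phi"
    and fin: "finite V" and Vu: "\<forall>vc\<in>V. fst vc \<bullet> u = 0"
    and x: "x \<bullet> u = 0" and r: "r > 0"
  shows "convex_body K \<Longrightarrow> K \<inter> {z. \<forall>vc\<in>V. fst vc \<bullet> z \<le> snd vc} \<subseteq> cball (x + t *\<^sub>R u) r \<Longrightarrow>
     (D K \<inter> {z. \<forall>vc\<in>V. fst vc \<bullet> z < snd vc}) - cball (x + phi t *\<^sub>R u) r \<in> null_sets lebesgue"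
  using fin Vu
proof (induction V arbitrary: K rule: finite_induct)
  case empty
  hence KB: "K \<subseteq> cball (x + t *\<^sub>R u) r" by simp
  have m1: "ae_subset (D K) (D (cball (x + t *\<^sub>R u) r))"
    by (rule JH_mono[OF D empty.prems(1) convex_body_cball[OF r] KB])
  have m2: "ae_subset (D (cball (x + t *\<^sub>R u) r)) (cball (x + phi t *\<^sub>R u) r)"
    using assoc_ball[OF u ac r x] by (simp add: ae_eq_def)
  show ?case using ae_subset_trans[OF m1 m2] by (simp add: ae_subset_def)
next
  case (insert vc W)
  obtain v c where vc: "vc = (v, c)" by (cases vc)
  have vu: "v \<bullet> u = 0" using insert.prems(3) vc by auto
  have Wu: "\<forall>vc\<in>W. fst vc \<bullet> u = 0" using insert.prems(3) by auto
  define PW where "PW = {z. \<forall>vc\<in>W. fst vc \<bullet> z \<le> snd vc}"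
  define OW where "OW = {z. \<forall>vc\<in>W. fst vc \<bullet> z < snd vc}"
  have eqP: "{z. \<forall>vc\<in>insert vc W. fst vc \<bullet> z \<le> snd vc} = {z. v \<bullet> z \<le> c} \<inter> PW"
    by (auto simp: vc PW_def)
  have eqO: "{z. \<forall>vc\<in>insert vc W. fst vc \<bullet> z < snd vc} = {z. v \<bullet> z < c} \<inter> OW"
    by (auto simp: vc OW_def)
  show ?case
  proof (cases "K \<inter> {z. v \<bullet> z < c} = {}")
    case False
    have KS: "convex_body (K \<inter> {z. v \<bullet> z \<le> c})" by (rule cb_Int_halfspace[OF insert.prems(1) False])
    have sub: "(K \<inter> {z. v \<bullet> z \<le> c}) \<inter> PW \<subseteq> cball (x + t *\<^sub>R u) r"
      using insert.prems(2) eqP by auto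
    have N1: "D (K \<inter> {z. v \<bullet> z \<le> c}) \<inter> OW - cball (x + phi t *\<^sub>R u) r \<in> null_sets lebesgue"
      using insert.IH[OF KS _ Wu] sub unfolding PW_def OW_def by blast
    have N2: "D K \<inter> {z. v \<bullet> z < c} - D (K \<inter> {z. v \<bullet> z \<le> c}) \<in> null_sets lebesgue"
      by (rule HS[OF u D ac insert.prems(1) vu KS])
    have "D K \<inter> ({z. v \<bullet> z < c} \<inter> OW) - cball (x + phi t *\<^sub>R u) r \<subseteq>
        (D (K \<inter> {z. v \<bullet> z \<le> c}) \<inter> OW - cball (x + phi t *\<^sub>R u) r) \<union>
        (D K \<inter> {z. v \<bullet> z < c} - D (K \<inter> {z. v \<bullet> z \<le> c}))" by blast
    moreover have "(D (K \<inter> {z. v \<bullet> z \<le> c}) \<inter> OW - cball (x + phi t *\<^sub>R u) r) \<union>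
        (D K \<inter> {z. v \<bullet> z < c} - D (K \<inter> {z. v \<bullet> z \<le> c})) \<in> null_sets lebesgue"
      using N1 N2 by auto
    ultimately show ?thesis unfolding eqO by (rule null_subset)
  next
    case True
    hence "K \<subseteq> {z. (- v) \<bullet> z \<le> - c}" by auto
    hence "D K - {z. (- v) \<bullet> z \<le> - c} \<in> null_sets lebesgue"
      using CH[OF u D ac insert.prems(1), of "- v" "- c"] vu by (simp add: ae_subset_def)
    moreover have "D K \<inter> ({z. v \<bullet> z < c} \<inter> OW) - cball (x + phi t *\<^sub>R u) r \<subseteq> D K - {z. (- v) \<bullet> z \<le> - c}"
      by auto
    ultimately show ?thesis unfolding eqO using null_subset by blast
  qed
qed



lemma Pu_inner_sym: "norm u = 1 \<Longrightarrow> Pu u b \<bullet> z = b \<bullet> Pu u z"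
  by (simp add: Pu_def inner_diff_left inner_diff_right inner_commute)

lemma separation:
  fixes u :: "'a::euclidean_space"
  assumes S: "compact S" and y: "y \<notin> Pu u ` S"
  shows "\<exists>\<delta>>0. \<forall>p\<in>S. \<delta> < norm (Pu u p - y)"
proof (cases "S = {}")
  case True thus ?thesis by (intro exI[of _ 1]) auto
next
  case False
  have "continuous_on S (\<lambda>p. norm (Pu u p - y))"
    by (intro continuous_intros continuous_on_subset[OF Pu_cont]) auto
  then obtain p0 where p0: "p0 \<in> S" "\<forall>p\<in>S. norm (Pu u p0 - y) \<le> norm (Pu u p - y)"
    using continuous_attains_inf[OF S False] by blast
  have "Pu u p0 \<noteq> y" using y p0(1) by auto
  hence pos: "norm (Pu u p0 - y) > 0" by simp
  have "\<forall>p\<in>S. norm (Pu u p0 - y) / 2 < norm (Pu u p - y)"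
  proof
    fix p assume "p \<in> S"
    hence "norm (Pu u p0 - y) \<le> norm (Pu u p - y)" using p0(2) by blast
    thus "norm (Pu u p0 - y) / 2 < norm (Pu u p - y)" using pos by linarith
  qed
  thus ?thesis using pos by (intro exI[of _ "norm (Pu u p0 - y) / 2"]) simp
qed

definition polyV :: "'a::euclidean_space \<Rightarrow> 'a \<Rightarrow> real \<Rightarrow> ('a \<times> real) set" where
  "polyV u y d = (\<lambda>b. (Pu u b, Pu u b \<bullet> y + d / DIM('a))) ` Basis \<union>
                 (\<lambda>b. (- Pu u b, - (Pu u b \<bullet> y) + d / DIM('a))) ` Basis"

lemma polyV_finite: "finite (polyV u y d)" by (simp add: polyV_def)

lemma polyV_orth: "norm u = 1 \<Longrightarrow> \<forall>vc\<in>polyV u y d. fst vc \<bullet> u = 0"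
  by (auto simp: polyV_def Pu_orth)

lemma polyV_open: "open {z. \<forall>vc\<in>polyV u y d. fst vc \<bullet> z < snd vc}"
proof -
  have "{z. \<forall>vc\<in>polyV u y d. fst vc \<bullet> z < snd vc} = (\<Inter>vc\<in>polyV u y d. {z. fst vc \<bullet> z < snd vc})"
    by auto
  thus ?thesis by (auto intro!: open_INT polyV_finite open_halfspace_lt)
qed

lemma polyV_in:
  assumes u: "norm u = 1" and y: "y \<bullet> u = 0" and d: "d > 0" and z: "Pu u z = y"
  shows "z \<in> {z. \<forall>vc\<in>polyV u y d. fst vc \<bullet> z < snd vc}"
proof -
  have e: "Pu u b \<bullet> z = Pu u b \<bullet> y" for b
    using Pu_inner_sym[OF u, of b z] Pu_inner_sym[OF u, of b y] Pu_idem[OF y] z by simp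
  have "d / DIM('a) > 0" using d by simp
  thus ?thesis using e by (auto simp: polyV_def)
qed

lemma polyV_close:
  assumes u: "norm u = 1" and y: "y \<bullet> u = 0" and d: "d > 0"
    and p: "p \<in> {z. \<forall>vc\<in>polyV u y d. fst vc \<bullet> z \<le> snd vc}"
  shows "norm (Pu u p - y) \<le> d"
proof -
  have b: "\<bar>(Pu u p - y) \<bullet> b\<bar> \<le> d / DIM('a)" if b: "b \<in> Basis" for b
  proof -
    have m1: "(Pu u b, Pu u b \<bullet> y + d / DIM('a)) \<in> polyV u y d" using b by (simp add: polyV_def)
    have m2: "(- Pu u b, - (Pu u b \<bullet> y) + d / DIM('a)) \<in> polyV u y d" using b by (simp add: polyV_def)
    have "Pu u b \<bullet> p \<le> Pu u b \<bullet> y + d / DIM('a)" "- Pu u b \<bullet> p \<le> - (Pu u b \<bullet> y) + d / DIM('a)"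
      using p m1 m2 by fastforce+
    moreover have "Pu u b \<bullet> p - Pu u b \<bullet> y = (Pu u p - y) \<bullet> b"
      using Pu_inner_sym[OF u, of b p] Pu_inner_sym[OF u, of b y] Pu_idem[OF y]
      by (simp add: inner_diff_left inner_diff_right inner_commute)
    ultimately show ?thesis by (simp add: abs_le_iff)
  qed
  have "norm (Pu u p - y) \<le> (\<Sum>b\<in>Basis. \<bar>(Pu u p - y) \<bullet> b\<bar>)" by (rule norm_le_l1)
  also have "\<dots> \<le> (\<Sum>b\<in>(Basis::'a set). d / DIM('a))" by (rule sum_mono) (rule b)
  also have "\<dots> = d" by simp
  finally show ?thesis .
qed

lemma main_ae:
  fixes u :: "'a::euclidean_space"
  assumes u: "norm u = 1" and D: "D \<in> JH u t0" and ac: "assoc_contraction u D phi"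
    and K: "convex_body K"
  shows "ae_subset (D K) (Dphi u phi K)"
proof -
  have Kc: "compact K" "convex K" using K by (auto simp: convex_body_def)
  define NN where "NN = {N. open N \<and> D K \<inter> N \<in> null_sets lebesgue}"
  have cover: "z \<in> \<Union>NN" if z: "z \<notin> Dphi u phi K" for z
  proof -
    define y where "y = Pu u z"
    have y0: "y \<bullet> u = 0" unfolding y_def by (rule Pu_orth[OF u])
    show ?thesis
    proof (cases "fib K u y = {}")
      case True
      hence ny: "y \<notin> Pu u ` K" using fib_ne_iff[OF u, of K z] by (simp add: y_def)
      obtain \<delta> where \<delta>: "\<delta> > 0" "\<forall>p\<in>K. \<delta> < norm (Pu u p - y)" using separation[OF Kc(1) ny] by blast
      define P where "P = {z. \<forall>vc\<in>polyV u y \<delta>. fst vc \<bullet> z < snd vc}"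
      have empt: "K \<inter> {z. \<forall>vc\<in>polyV u y \<delta>. fst vc \<bullet> z \<le> snd vc} = {}"
        using polyV_close[OF u y0 \<delta>(1)] \<delta>(2) by force
      define c where "c = y + phi 0 *\<^sub>R u"
      have nj: "D K \<inter> P - cball c (1 / real (Suc j)) \<in> null_sets lebesgue" for j
      proof -
        have r1: "1 / real (Suc j) > 0" by simp
        have "K \<inter> {z. \<forall>vc\<in>polyV u y \<delta>. fst vc \<bullet> z \<le> snd vc} \<subseteq> cball (y + 0 *\<^sub>R u) (1 / real (Suc j))"
          using empt by simp
        from poly[OF u D ac polyV_finite polyV_orth[OF u] y0 r1 K this]
        show ?thesis unfolding P_def c_def .
      qed
      have "D K \<inter> P \<subseteq> (\<Union>j. D K \<inter> P - cball c (1 / real (Suc j))) \<union> {c}"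
      proof
        fix q assume q: "q \<in> D K \<inter> P"
        show "q \<in> (\<Union>j. D K \<inter> P - cball c (1 / real (Suc j))) \<union> {c}"
        proof (cases "q = c")
          case False
          hence "dist c q > 0" by simp
          then obtain j where "inverse (real (Suc j)) < dist c q" using reals_Archimedean by blast
          hence "q \<notin> cball c (1 / real (Suc j))" by (simp add: inverse_eq_divide)
          thus ?thesis using q by blast
        qed simp
      qed
      moreover have "(\<Union>j. D K \<inter> P - cball c (1 / real (Suc j))) \<union> {c} \<in> null_sets lebesgue"
        using nj negligible_sing[of c] negligible_iff_null_sets by blast
      ultimately have "D K \<inter> P \<in> null_sets lebesgue" by (rule null_subset)
      moreover have "open P" unfolding P_def by (rule polyV_open)
      moreover have "z \<in> P" unfolding P_def by (rule polyV_in[OF u y0 \<delta>(1)]) (simp add: y_def)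
      ultimately show ?thesis unfolding NN_def by blast
    next
      case False
      note iv = fib_interval[OF u Kc False]
      define a where "a = lo K u y"
      define b where "b = hi K u y"
      define m where "m = mid K u y"
      define h where "h = hh K u y"
      have mab: "m = (a + b) / 2" "h = (b - a) / 2" by (simp_all add: m_def h_def a_def b_def mid_def hh_def)
      have fibab: "fib K u y = {a..b}" using iv by (simp add: a_def b_def)
      have nz: "\<bar>z \<bullet> u - phi m\<bar> > h"
        using z Dphi_mem[OF u Kc, of z phi] False by (auto simp: y_def m_def h_def)
      define \<eta> where "\<eta> = (\<bar>z \<bullet> u - phi m\<bar> - h) / 4"
      have \<eta>: "\<eta> > 0" using nz by (simp add: \<eta>_def)
      have pfib: "p \<bullet> u \<in> {a..b}" if "p \<in> K" "Pu u p = y" for p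
      proof -
        have "y + (p \<bullet> u) *\<^sub>R u = p" using Pu_decomp[of p u] that(2) by simp
        hence "p \<bullet> u \<in> fib K u y" using that(1) by (simp add: fib_def)
        thus ?thesis using fibab by simp
      qed
      define Shi where "Shi = K \<inter> {p. b + \<eta> \<le> p \<bullet> u}"
      define Slo where "Slo = K \<inter> {p. p \<bullet> u \<le> a - \<eta>}"
      have cShi: "compact Shi" unfolding Shi_def
        by (rule compact_Int_closed[OF Kc(1)]) (simp add: closed_Collect_le continuous_on_inner continuous_on_const continuous_on_id)
      have cSlo: "compact Slo" unfolding Slo_def
        by (rule compact_Int_closed[OF Kc(1)]) (simp add: closed_Collect_le continuous_on_inner continuous_on_const continuous_on_id)
      have nhi: "y \<notin> Pu u ` Shi"
      proof
        assume "y \<in> Pu u ` Shi"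
        then obtain p where p: "p \<in> K" "b + \<eta> \<le> p \<bullet> u" "Pu u p = y" by (auto simp: Shi_def)
        thus False using pfib[OF p(1,3)] \<eta> by simp
      qed
      have nlo: "y \<notin> Pu u ` Slo"
      proof
        assume "y \<in> Pu u ` Slo"
        then obtain p where p: "p \<in> K" "p \<bullet> u \<le> a - \<eta>" "Pu u p = y" by (auto simp: Slo_def)
        thus False using pfib[OF p(1,3)] \<eta> by simp
      qed
      obtain \<delta>1 where \<delta>1: "\<delta>1 > 0" "\<forall>p\<in>Shi. \<delta>1 < norm (Pu u p - y)" using separation[OF cShi nhi] by blast
      obtain \<delta>2 where \<delta>2: "\<delta>2 > 0" "\<forall>p\<in>Slo. \<delta>2 < norm (Pu u p - y)" using separation[OF cSlo nlo] by blast
      define \<delta> where "\<delta> = min \<eta> (min \<delta>1 \<delta>2)"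
      have \<delta>: "\<delta> > 0" "\<delta> \<le> \<eta>" "\<delta> \<le> \<delta>1" "\<delta> \<le> \<delta>2" using \<eta> \<delta>1 \<delta>2 by (auto simp: \<delta>_def)
      define \<rho> where "\<rho> = \<delta> + h + \<eta>"
      have h0: "h \<ge> 0" using iv(2) by (simp add: h_def hh_def)
      have \<rho>0: "\<rho> > 0" using \<delta> h0 \<eta> by (simp add: \<rho>_def)
      have sub: "K \<inter> {z. \<forall>vc\<in>polyV u y \<delta>. fst vc \<bullet> z \<le> snd vc} \<subseteq> cball (y + m *\<^sub>R u) \<rho>"
      proof
        fix p assume p: "p \<in> K \<inter> {z. \<forall>vc\<in>polyV u y \<delta>. fst vc \<bullet> z \<le> snd vc}"
        have nd: "norm (Pu u p - y) \<le> \<delta>" using polyV_close[OF u y0 \<delta>(1)] p by blast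
        have "p \<notin> Shi" using \<delta>1(2) nd \<delta>(3) by force
        hence up: "p \<bullet> u < b + \<eta>" using p by (auto simp: Shi_def)
        have "p \<notin> Slo" using \<delta>2(2) nd \<delta>(4) by force
        hence lw: "a - \<eta> < p \<bullet> u" using p by (auto simp: Slo_def)
        have pm: "\<bar>p \<bullet> u - m\<bar> \<le> h + \<eta>" using up lw mab by (simp add: abs_le_iff field_simps)
        have eqp: "p - (y + m *\<^sub>R u) = (Pu u p - y) + (p \<bullet> u - m) *\<^sub>R u"
          by (simp add: Pu_def algebra_simps)
        have "norm (p - (y + m *\<^sub>R u)) \<le> norm (Pu u p - y) + \<bar>p \<bullet> u - m\<bar>"
          unfolding eqp using norm_triangle_ineq[of "Pu u p - y" "(p \<bullet> u - m) *\<^sub>R u"] u by simp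
        also have "\<dots> \<le> \<rho>" using nd pm by (simp add: \<rho>_def)
        finally show "p \<in> cball (y + m *\<^sub>R u) \<rho>" by (simp add: dist_norm norm_minus_commute)
      qed
      define P where "P = {z. \<forall>vc\<in>polyV u y \<delta>. fst vc \<bullet> z < snd vc}"
      define N where "N = P - cball (y + phi m *\<^sub>R u) \<rho>"
      have "D K \<inter> P - cball (y + phi m *\<^sub>R u) \<rho> \<in> null_sets lebesgue"
        unfolding P_def
        by (rule poly[OF u D ac polyV_finite polyV_orth[OF u] y0 \<rho>0 K sub])
      moreover have "D K \<inter> N = D K \<inter> P - cball (y + phi m *\<^sub>R u) \<rho>" by (auto simp: N_def)
      ultimately have Nn: "D K \<inter> N \<in> null_sets lebesgue" by simp
      have "open P" unfolding P_def by (rule polyV_open)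
      hence No: "open N" unfolding N_def by (intro open_Diff) auto
      have zP: "z \<in> P" unfolding P_def by (rule polyV_in[OF u y0 \<delta>(1)]) (simp add: y_def)
      have "z - (y + phi m *\<^sub>R u) = (z \<bullet> u - phi m) *\<^sub>R u"
        using Pu_decomp[of z u] by (simp add: y_def algebra_simps)
      hence "norm (z - (y + phi m *\<^sub>R u)) = \<bar>z \<bullet> u - phi m\<bar>" using u by simp
      moreover have "\<bar>z \<bullet> u - phi m\<bar> > \<rho>"
      proof -
        have "\<bar>z \<bullet> u - phi m\<bar> = h + 4 * \<eta>" unfolding \<eta>_def by (simp add: field_simps)
        thus ?thesis using \<delta>(2) \<eta> unfolding \<rho>_def by linarith
      qed
      ultimately have "z \<notin> cball (y + phi m *\<^sub>R u) \<rho>" by (simp add: dist_norm norm_minus_commute)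
      hence "z \<in> N" using zP by (simp add: N_def)
      thus ?thesis using Nn No unfolding NN_def by blast
    qed
  qed
  have opens: "\<And>S. S \<in> NN \<Longrightarrow> open S" by (simp add: NN_def)
  obtain F where F: "F \<subseteq> NN" "countable F" "\<Union>F = \<Union>NN" using Lindelof[OF opens] by blast
  have "D K - Dphi u phi K \<subseteq> (\<Union>N\<in>F. D K \<inter> N)" using cover F(3) by blast
  moreover have "(\<Union>N\<in>F. D K \<inter> N) \<in> null_sets lebesgue"
    by (rule null_sets_UN'[OF F(2)]) (use F(1) in \<open>auto simp: NN_def\<close>)
  ultimately show ?thesis unfolding ae_subset_def by (rule null_subset)
qed



lemma D_eq_Dphi:
  fixes u :: "'a::euclidean_space"
  assumes u: "norm u = 1" and D: "D \<in> JH u t0" and ac: "assoc_contraction u D phi"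
    and K: "convex_body K"
  shows "ae_eq (D K) (Dphi u phi K)"
proof -
  have lip: "lip1 phi" using phi_lip[OF u D ac] by (auto simp: lip1_def)
  have Kc: "compact K" "convex K" using K by (auto simp: convex_body_def)
  have DKm: "D K \<in> lmeasurable" by (rule JH_fin[OF D K])
  have Kl: "K \<in> lmeasurable" by (rule cb_lmeas[OF K])
  have Pb: "Dphi u phi K \<in> sets lebesgue" using Dphi_meas(1)[OF u lip Kc] borel_lebesgue by blast
  have Pe: "emeasure lebesgue (Dphi u phi K) = emeasure lebesgue K" by (rule Dphi_meas(2)[OF u lip Kc])
  have "emeasure lebesgue K < \<infinity>" using Kl unfolding fmeasurable_def by blast
  hence "emeasure lebesgue (Dphi u phi K) < \<infinity>" unfolding Pe .
  hence Pm: "Dphi u phi K \<in> lmeasurable" using Pb unfolding fmeasurable_def by blast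
  have mD: "measure lebesgue (D K) = measure lebesgue K" by (rule JH_measure[OF D K])
  have mP: "measure lebesgue (Dphi u phi K) = measure lebesgue K" using Pe by (simp add: measure_def)
  have n1: "D K - Dphi u phi K \<in> null_sets lebesgue" using main_ae[OF u D ac K] by (simp add: ae_subset_def)
  have "measure lebesgue (D K - (D K - Dphi u phi K)) = measure lebesgue (D K)"
    by (rule measure_Diff_null_set[OF fmeasurableD[OF DKm] n1])
  moreover have "D K - (D K - Dphi u phi K) = Dphi u phi K \<inter> D K" by blast
  ultimately have mI: "measure lebesgue (Dphi u phi K \<inter> D K) = measure lebesgue K" using mD by simp
  have "measure lebesgue (Dphi u phi K - (Dphi u phi K \<inter> D K)) = measure lebesgue (Dphi u phi K) - measure lebesgue (Dphi u phi K \<inter> D K)"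
    by (rule measure_Diff) (use Pm DKm in \<open>auto simp: fmeasurable_def\<close>)
  moreover have "Dphi u phi K - (Dphi u phi K \<inter> D K) = Dphi u phi K - D K" by blast
  ultimately have "measure lebesgue (Dphi u phi K - D K) = 0" using mP mI by simp
  moreover have "Dphi u phi K - D K \<in> lmeasurable" using Pm DKm by (intro fmeasurable_Diff) auto
  ultimately have n2: "Dphi u phi K - D K \<in> null_sets lebesgue" using null_from_measure0 by blast
  show ?thesis using n1 n2 by (simp add: ae_eq_def ae_subset_def)
qed

lemma unif_conv:
  fixes phis :: "nat \<Rightarrow> real \<Rightarrow> real"
  assumes lip: "\<And>k. lip1 (phis k)" "lip1 phi" and lim: "\<And>t. (\<lambda>k. phis k t) \<longlonglongrightarrow> phi t"
    and e: "\<epsilon> > 0"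
  shows "eventually (\<lambda>k. \<forall>t\<in>{-R..R}. \<bar>phis k t - phi t\<bar> \<le> \<epsilon>) sequentially"
proof -
  define h where "h = \<epsilon> / 3"
  have h: "h > 0" using e by (simp add: h_def)
  define N where "N = nat \<lceil>2 * \<bar>R\<bar> / h\<rceil>"
  define tp where "tp i = - R + real i * h" for i :: nat
  have ev: "eventually (\<lambda>k. \<forall>i\<in>{..N}. \<bar>phis k (tp i) - phi (tp i)\<bar> < h) sequentially"
  proof (rule eventually_ball_finite)
    show "\<forall>i\<in>{..N}. eventually (\<lambda>k. \<bar>phis k (tp i) - phi (tp i)\<bar> < h) sequentially"
    proof
      fix i
      have "eventually (\<lambda>k. dist (phis k (tp i)) (phi (tp i)) < h) sequentially"
        using lim[of "tp i"] h by (simp add: tendsto_iff)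
      thus "eventually (\<lambda>k. \<bar>phis k (tp i) - phi (tp i)\<bar> < h) sequentially" by (simp add: dist_real_def)
    qed
  qed simp
  show ?thesis
  proof (rule eventually_mono[OF ev], intro ballI)
    fix k t assume k: "\<forall>i\<in>{..N}. \<bar>phis k (tp i) - phi (tp i)\<bar> < h" and t: "t \<in> {-R..R}"
    define i where "i = nat \<lfloor>(t + R) / h\<rfloor>"
    have tR: "0 \<le> t + R" using t by simp
    have fl0: "0 \<le> \<lfloor>(t + R) / h\<rfloor>" using tR h by simp
    have ii: "real i = of_int \<lfloor>(t + R) / h\<rfloor>" using fl0 by (simp add: i_def)
    have a1: "real i \<le> (t + R) / h" "(t + R) / h < real i + 1" unfolding ii by linarith+
    have "real i * h \<le> t + R" using a1(1) h by (simp add: field_simps)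
    moreover have "t + R < real i * h + h" using a1(2) h by (simp add: field_simps)
    ultimately have dt: "\<bar>t - tp i\<bar> \<le> h" by (simp add: tp_def abs_le_iff)
    have "(t + R) / h \<le> 2 * \<bar>R\<bar> / h" using t h by (intro divide_right_mono) auto
    hence "real i \<le> 2 * \<bar>R\<bar> / h" using a1 by linarith
    hence "i \<le> N" unfolding N_def by linarith
    hence c: "\<bar>phis k (tp i) - phi (tp i)\<bar> < h" using k by simp
    have l1: "\<bar>phis k t - phis k (tp i)\<bar> \<le> h" using lip(1)[of k] dt by (auto simp: lip1_def intro: order_trans)
    have l2: "\<bar>phi (tp i) - phi t\<bar> \<le> h" using lip(2) dt by (auto simp: lip1_def abs_minus_commute intro: order_trans)
    have "\<bar>phis k t - phi t\<bar> \<le> \<bar>phis k t - phis k (tp i)\<bar> + \<bar>phis k (tp i) - phi (tp i)\<bar> + \<bar>phi (tp i) - phi t\<bar>"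
      by linarith
    thus "\<bar>phis k t - phi t\<bar> \<le> \<epsilon>" using l1 l2 c by (simp add: h_def)
  qed
qed

lemma mid_bound:
  fixes u :: "'a::euclidean_space"
  assumes u: "norm u = 1" and K: "compact K" "convex K"
  shows "\<exists>B. \<forall>z. \<bar>mid K u (Pu u z)\<bar> \<le> B"
proof -
  obtain B0 where B0: "\<And>p. p \<in> K \<Longrightarrow> norm p \<le> B0" using compact_imp_bounded[OF K(1)] by (auto simp: bounded_iff)
  have "\<bar>mid K u (Pu u z)\<bar> \<le> max B0 0" for z
  proof (cases "fib K u (Pu u z) = {}")
    case True thus ?thesis by (simp add: mid_def lo_def hi_def)
  next
    case False
    note iv = fib_interval[OF u K False]
    have bnd: "\<bar>t\<bar> \<le> B0" if "t \<in> fib K u (Pu u z)" for t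
    proof -
      have "norm (Pu u z + t *\<^sub>R u) \<le> B0" using that B0 by (simp add: fib_def)
      moreover have "norm (Pu u z + t *\<^sub>R u) ^ 2 = norm (Pu u z) ^ 2 + t ^ 2" by (rule pyth[OF u Pu_orth[OF u]])
      hence "t ^ 2 \<le> norm (Pu u z + t *\<^sub>R u) ^ 2" by simp
      hence "\<bar>t\<bar> \<le> norm (Pu u z + t *\<^sub>R u)" by (simp add: abs_le_square_iff[symmetric])
      ultimately show ?thesis by simp
    qed
    have "\<bar>lo K u (Pu u z)\<bar> \<le> B0" "\<bar>hi K u (Pu u z)\<bar> \<le> B0" using iv bnd by auto
    thus ?thesis by (simp add: mid_def)
  qed
  thus ?thesis by blast
qed

lemma lim_MI:
  fixes u :: "'a::euclidean_space"
  assumes u: "norm u = 1" and K: "compact K" "convex K"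
  defines "M \<equiv> \<lambda>d. {p + t *\<^sub>R u | p t. p \<in> K \<and> t \<in> {-d..d}}"
    and "I \<equiv> \<lambda>d. {p. p \<in> K \<and> p - d *\<^sub>R u \<in> K \<and> p + d *\<^sub>R u \<in> K}"
  shows "compact (M d)" "convex (M d)" "compact (I d)" "convex (I d)"
    and "(\<lambda>j. measure lebesgue (M (1 / real (Suc j))) - measure lebesgue (I (1 / real (Suc j)))) \<longlonglongrightarrow> 0"
proof -
  have seg: "compact ((\<lambda>t. t *\<^sub>R u) ` {-d..d})" "convex ((\<lambda>t. t *\<^sub>R u) ` {-d..d})" for d
  proof -
    show "compact ((\<lambda>t. t *\<^sub>R u) ` {-d..d})"
      by (rule compact_continuous_image) (auto intro!: continuous_intros)
    show "convex ((\<lambda>t. t *\<^sub>R u) ` {-d..d})"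
      by (rule convex_linear_image) (auto intro: linearI simp: scaleR_add_left)
  qed
  have Meq: "M d = {x + y | x y. x \<in> K \<and> y \<in> (\<lambda>t. t *\<^sub>R u) ` {-d..d}}" for d
    unfolding M_def by blast
  show Mc: "compact (M d)" for d unfolding Meq by (rule compact_sums[OF K(1) seg(1)])
  show "convex (M d)" for d
  proof -
    have "{x + y | x y. x \<in> K \<and> y \<in> (\<lambda>t. t *\<^sub>R u) ` {-d..d}} = (\<Union>x\<in>K. \<Union>y\<in>(\<lambda>t. t *\<^sub>R u) ` {-d..d}. {x + y})"
      by blast
    thus ?thesis unfolding Meq using convex_sums[OF K(2) seg(2)] by simp
  qed
  have Ieq: "I d = K \<inter> (\<lambda>p. p - d *\<^sub>R u) -` K \<inter> (\<lambda>p. p + d *\<^sub>R u) -` K" for d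
    unfolding I_def by auto
  show Ic: "compact (I d)" for d
  proof -
    have "closed ((\<lambda>p. p - d *\<^sub>R u) -` K)" "closed ((\<lambda>p. p + d *\<^sub>R u) -` K)"
      by (rule continuous_closed_vimage, use K compact_imp_closed in \<open>auto intro!: continuous_intros\<close>)+
    hence "closed ((\<lambda>p. p - d *\<^sub>R u) -` K \<inter> (\<lambda>p. p + d *\<^sub>R u) -` K)" by (rule closed_Int)
    hence "compact (K \<inter> ((\<lambda>p. p - d *\<^sub>R u) -` K \<inter> (\<lambda>p. p + d *\<^sub>R u) -` K))"
      by (rule compact_Int_closed[OF K(1)])
    thus ?thesis unfolding Ieq by (simp add: Int_assoc)
  qed
  show "convex (I d)" for d
    unfolding convex_def I_def
  proof (safe)
    fix x y :: 'a and a b :: real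
    assume h: "x \<in> K" "x - d *\<^sub>R u \<in> K" "x + d *\<^sub>R u \<in> K" "y \<in> K" "y - d *\<^sub>R u \<in> K" "y + d *\<^sub>R u \<in> K"
      "0 \<le> a" "0 \<le> b" "a + b = 1"
    show "a *\<^sub>R x + b *\<^sub>R y \<in> K" by (rule convexD[OF K(2) h(1) h(4) h(7) h(8) h(9)])
    have "a *\<^sub>R (x - d *\<^sub>R u) + b *\<^sub>R (y - d *\<^sub>R u) \<in> K" by (rule convexD[OF K(2) h(2) h(5) h(7) h(8) h(9)])
    moreover have "a *\<^sub>R (x - d *\<^sub>R u) + b *\<^sub>R (y - d *\<^sub>R u) = a *\<^sub>R x + b *\<^sub>R y - (a + b) *\<^sub>R (d *\<^sub>R u)"
      by (simp add: algebra_simps)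
    hence "a *\<^sub>R (x - d *\<^sub>R u) + b *\<^sub>R (y - d *\<^sub>R u) = a *\<^sub>R x + b *\<^sub>R y - d *\<^sub>R u"
      using h(9) by simp
    ultimately show "a *\<^sub>R x + b *\<^sub>R y - d *\<^sub>R u \<in> K" by simp
    have "a *\<^sub>R (x + d *\<^sub>R u) + b *\<^sub>R (y + d *\<^sub>R u) \<in> K" by (rule convexD[OF K(2) h(3) h(6) h(7) h(8) h(9)])
    moreover have "a *\<^sub>R (x + d *\<^sub>R u) + b *\<^sub>R (y + d *\<^sub>R u) = a *\<^sub>R x + b *\<^sub>R y + (a + b) *\<^sub>R (d *\<^sub>R u)"
      by (simp add: algebra_simps)
    hence "a *\<^sub>R (x + d *\<^sub>R u) + b *\<^sub>R (y + d *\<^sub>R u) = a *\<^sub>R x + b *\<^sub>R y + d *\<^sub>R u"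
      using h(9) by simp
    ultimately show "a *\<^sub>R x + b *\<^sub>R y + d *\<^sub>R u \<in> K" by simp
  qed
  define dj where "dj j = 1 / real (Suc j)" for j
  have djp: "dj j > 0" for j by (simp add: dj_def)
  have dj_small: "\<exists>j. dj j < r" if rp: "r > 0" for r
  proof -
    obtain j where "inverse (real (Suc j)) < r" using reals_Archimedean[OF rp] by auto
    thus ?thesis unfolding dj_def by (auto simp: inverse_eq_divide)
  qed
  have djmono: "dj j' \<le> dj j" if "j \<le> j'" for j j'
    using that by (simp add: dj_def frac_le)
  have Ml: "M d \<in> sets lebesgue" for d using Mc by (simp add: borel_lebesgue borel_compact)
  have Il: "I d \<in> sets lebesgue" for d using Ic by (simp add: borel_lebesgue borel_compact)
  have Kl: "K \<in> sets lebesgue" using K by (simp add: borel_lebesgue borel_compact)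
  have fin: "emeasure lebesgue (M d) \<noteq> \<infinity>" for d
    using lmeasurable_compact[OF Mc[of d]] unfolding fmeasurable_def by auto
  have finK: "emeasure lebesgue K \<noteq> top"
    by (rule fmeasurableD2[OF lmeasurable_compact[OF K(1)]])
  have M_anti: "antimono_on UNIV (\<lambda>j. M (dj j))"
    unfolding monotone_on_def
  proof (intro ballI impI)
    fix j j' :: nat assume "j \<le> j'"
    hence "dj j' \<le> dj j" by (rule djmono)
    thus "M (dj j') \<subseteq> M (dj j)" unfolding M_def by fastforce
  qed
  have M_int: "(\<Inter>j. M (dj j)) = K"
  proof
    show "K \<subseteq> (\<Inter>j. M (dj j))"
    proof
      fix p assume p: "p \<in> K"
      have "p = p + 0 *\<^sub>R u" by simp
      moreover have "(0::real) \<in> {- dj j..dj j}" for j using djp[of j] by simp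
      ultimately show "p \<in> (\<Inter>j. M (dj j))" unfolding M_def using p by blast
    qed
  next
    show "(\<Inter>j. M (dj j)) \<subseteq> K"
    proof
      fix z assume z: "z \<in> (\<Inter>j. M (dj j))"
      show "z \<in> K"
      proof (rule ccontr)
        assume zK: "z \<notin> K"
        have "open (- K)" using K(1) compact_imp_closed[of K] by (auto simp: closed_def)
        then obtain r where r: "r > 0" "ball z r \<subseteq> - K" using zK open_contains_ball by blast
        obtain j where j: "dj j < r" using dj_small[OF r(1)] by auto
        from z have "z \<in> M (dj j)" by auto
        then obtain p t where pt: "z = p + t *\<^sub>R u" "p \<in> K" "- dj j \<le> t" "t \<le> dj j" unfolding M_def by auto
        have "dist z p = \<bar>t\<bar>" using pt u by (simp add: dist_norm)
        hence "p \<in> ball z r" using pt j by simp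
        thus False using r pt by auto
      qed
    qed
  qed
  have lim1: "(\<lambda>j. emeasure lebesgue (M (dj j))) \<longlonglongrightarrow> emeasure lebesgue K"
    using Lim_emeasure_decseq[of "\<lambda>j. M (dj j)" lebesgue] M_anti fin Ml M_int by auto
  have I_inc: "incseq (\<lambda>j. I (dj j))"
  proof (rule incseq_SucI)
    fix j
    show "I (dj j) \<subseteq> I (dj (Suc j))"
    proof
      fix z assume z: "z \<in> I (dj j)"
      hence z1: "z \<in> K" "z - dj j *\<^sub>R u \<in> K" "z + dj j *\<^sub>R u \<in> K" by (auto simp: I_def)
      define c where "c = dj (Suc j) / dj j"
      have c: "0 \<le> c" "c \<le> 1" using djp[of j] djp[of "Suc j"] djmono[of j "Suc j"] by (auto simp: c_def)
      have "(1 - c) *\<^sub>R z + c *\<^sub>R (z - dj j *\<^sub>R u) \<in> K" by (rule convexD[OF K(2) z1(1,2)]) (use c in auto)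
      moreover have "(1 - c) *\<^sub>R z + c *\<^sub>R (z - dj j *\<^sub>R u) = z - dj (Suc j) *\<^sub>R u"
        using djp[of j] by (simp add: c_def algebra_simps)
      moreover have "(1 - c) *\<^sub>R z + c *\<^sub>R (z + dj j *\<^sub>R u) \<in> K" by (rule convexD[OF K(2) z1(1,3)]) (use c in auto)
      moreover have "(1 - c) *\<^sub>R z + c *\<^sub>R (z + dj j *\<^sub>R u) = z + dj (Suc j) *\<^sub>R u"
        using djp[of j] by (simp add: c_def algebra_simps)
      ultimately show "z \<in> I (dj (Suc j))" using z1 by (simp add: I_def)
    qed
  qed
  have lim2: "(\<lambda>j. emeasure lebesgue (I (dj j))) \<longlonglongrightarrow> emeasure lebesgue (\<Union>j. I (dj j))"
    using Lim_emeasure_incseq[of "\<lambda>j. I (dj j)" lebesgue] I_inc Il by auto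
  have intsub: "interior K \<subseteq> (\<Union>j. I (dj j))"
  proof
    fix z assume "z \<in> interior K"
    then obtain r where r: "r > 0" "ball z r \<subseteq> K" using open_interior open_contains_ball interior_subset
      by (metis subset_trans)
    obtain j where j: "dj j < r" using dj_small[OF r(1)] by auto
    have "dist z (z - dj j *\<^sub>R u) = dj j" "dist z (z + dj j *\<^sub>R u) = dj j" using u djp[of j] by (simp_all add: dist_norm)
    hence "z - dj j *\<^sub>R u \<in> K" "z + dj j *\<^sub>R u \<in> K" using r j by auto
    moreover have "z \<in> K" using r by auto
    ultimately show "z \<in> (\<Union>j. I (dj j))" unfolding I_def by auto
  qed
  have "emeasure lebesgue K = emeasure lebesgue (interior K)"
    using emeasure_interior_convex[OF K(2) compact_imp_closed[OF K(1)]] by simp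
  also have "\<dots> \<le> emeasure lebesgue (\<Union>j. I (dj j))"
    by (rule emeasure_mono[OF intsub]) (use Il in auto)
  finally have le1: "emeasure lebesgue K \<le> emeasure lebesgue (\<Union>j. I (dj j))" .
  have "(\<Union>j. I (dj j)) \<subseteq> K" unfolding I_def by auto
  hence le2: "emeasure lebesgue (\<Union>j. I (dj j)) \<le> emeasure lebesgue K" by (rule emeasure_mono) (rule Kl)
  have lim2': "(\<lambda>j. emeasure lebesgue (I (dj j))) \<longlonglongrightarrow> emeasure lebesgue K"
    using lim2 le1 le2 by simp
  have eK: "emeasure lebesgue K = ennreal (measure lebesgue K)" by (rule emeasure_eq_ennreal_measure[OF finK])
  have r1: "(\<lambda>j. enn2real (emeasure lebesgue (M (dj j)))) \<longlonglongrightarrow> measure lebesgue K"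
    by (rule tendsto_enn2real) (use lim1 eK in auto)
  have r2: "(\<lambda>j. enn2real (emeasure lebesgue (I (dj j)))) \<longlonglongrightarrow> measure lebesgue K"
    by (rule tendsto_enn2real) (use lim2' eK in auto)
  show "(\<lambda>j. measure lebesgue (M (1 / real (Suc j))) - measure lebesgue (I (1 / real (Suc j)))) \<longlonglongrightarrow> 0"
    using tendsto_diff[OF r1 r2] by (simp add: dj_def measure_def)
qed



lemma Dphi_lmeas:
  fixes u :: "'a::euclidean_space"
  assumes u: "norm u = 1" and lip: "lip1 phi" and K: "compact K" "convex K"
  shows "Dphi u phi K \<in> lmeasurable" "measure lebesgue (Dphi u phi K) = measure lebesgue K"
proof -
  have Pb: "Dphi u phi K \<in> sets lebesgue" using Dphi_meas(1)[OF u lip K] borel_lebesgue by blast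
  have Pe: "emeasure lebesgue (Dphi u phi K) = emeasure lebesgue K" by (rule Dphi_meas(2)[OF u lip K])
  have "emeasure lebesgue K < \<infinity>" using lmeasurable_compact[OF K(1)] unfolding fmeasurable_def by blast
  hence "emeasure lebesgue (Dphi u phi K) < \<infinity>" unfolding Pe .
  thus "Dphi u phi K \<in> lmeasurable" using Pb unfolding fmeasurable_def by blast
  show "measure lebesgue (Dphi u phi K) = measure lebesgue K" using Pe by (simp add: measure_def)
qed

lemma Sh_lmeas:
  fixes u :: "'a::euclidean_space"
  assumes u: "norm u = 1" and g: "g \<in> borel_measurable borel" and ui: "uinv u g" and L: "compact L" "convex L"
  shows "Sh u g L \<in> lmeasurable" "measure lebesgue (Sh u g L) = measure lebesgue L"
proof -
  have Pb: "Sh u g L \<in> sets lebesgue" using S2(1)[OF u g ui L] borel_lebesgue by blast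
  have Pe: "emeasure lebesgue (Sh u g L) = emeasure lebesgue L" by (rule S2(2)[OF u g ui L])
  have "emeasure lebesgue L < \<infinity>" using lmeasurable_compact[OF L(1)] unfolding fmeasurable_def by blast
  hence "emeasure lebesgue (Sh u g L) < \<infinity>" unfolding Pe .
  thus "Sh u g L \<in> lmeasurable" using Pb unfolding fmeasurable_def by blast
  show "measure lebesgue (Sh u g L) = measure lebesgue L" using Pe by (simp add: measure_def)
qed

lemma Dphi_conv:
  fixes u :: "'a::euclidean_space" and phis :: "nat \<Rightarrow> real \<Rightarrow> real"
  assumes u: "norm u = 1" and lips: "\<And>k. lip1 (phis k)" and lip: "lip1 phi"
    and lim: "\<And>t. (\<lambda>k. phis k t) \<longlonglongrightarrow> phi t" and K: "convex_body K"
  shows "(\<lambda>k. emeasure lebesgue ((Dphi u (phis k) K - Dphi u phi K) \<union> (Dphi u phi K - Dphi u (phis k) K))) \<longlonglongrightarrow> 0"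
proof -
  have Kc: "compact K" "convex K" using K by (auto simp: convex_body_def)
  define g where "g = gsh phi K u"
  define e where "e k z = gsh (phis k) K u z - g z" for k z
  have gm: "g \<in> borel_measurable borel" unfolding g_def by (rule gsh_meas[OF u Kc(1) lip1_cont[OF lip]])
  have gkm: "gsh (phis k) K u \<in> borel_measurable borel" for k by (rule gsh_meas[OF u Kc(1) lip1_cont[OF lips]])
  have uig: "uinv u g" unfolding g_def by (rule uinv_gsh[OF u])
  have uie: "uinv u (e k)" for k
    using uinv_gsh[OF u, of "phis k" K] uinv_gsh[OF u, of phi K] by (simp add: uinv_def e_def g_def)
  have comp: "Dphi u (phis k) K = Sh u g (Sh u (e k) K)" for k
  proof -
    have "(\<lambda>z. g z + e k z) = gsh (phis k) K u" by (rule ext) (simp add: e_def)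
    thus ?thesis unfolding Dphi_def Sh_comp[OF uie] by simp
  qed
  have eform: "e k z = phis k (mid K u (Pu u z)) - phi (mid K u (Pu u z))" for k z
    by (simp add: e_def g_def gsh_def)
  define M where "M = (\<lambda>d. {p + t *\<^sub>R u | p t. p \<in> K \<and> t \<in> {-d..d}})"
  define I where "I = (\<lambda>d. {p. p \<in> K \<and> p - d *\<^sub>R u \<in> K \<and> p + d *\<^sub>R u \<in> K})"
  have MI: "compact (M d)" "convex (M d)" "compact (I d)" "convex (I d)" for d
    unfolding M_def I_def by (rule lim_MI[OF u Kc])+
  have MI5: "(\<lambda>j. measure lebesgue (M (1 / real (Suc j))) - measure lebesgue (I (1 / real (Suc j)))) \<longlonglongrightarrow> 0"
    unfolding M_def I_def by (rule lim_MI(5)[OF u Kc])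
  define SD where "SD k = (Dphi u (phis k) K - Dphi u phi K) \<union> (Dphi u phi K - Dphi u (phis k) K)" for k
  have SDm: "SD k \<in> lmeasurable" for k
    unfolding SD_def using Dphi_lmeas(1)[OF u lips Kc, of k] Dphi_lmeas(1)[OF u lip Kc]
    by (intro fmeasurable.Un fmeasurable_Diff) auto
  have bound: "measure lebesgue (SD k) \<le> measure lebesgue (M d) - measure lebesgue (I d)"
    if d: "d > 0" and ek: "\<forall>z. \<bar>e k z\<bar> \<le> d" for k d
  proof -
    have KM: "K \<subseteq> M d"
    proof
      fix w assume w: "w \<in> K"
      have "w = w + 0 *\<^sub>R u" by simp
      moreover have "(0::real) \<in> {-d..d}" using d by simp
      ultimately show "w \<in> M d" unfolding M_def using w by blast
    qed
    have SM: "Sh u (e k) K \<subseteq> M d"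
    proof
      fix w assume "w \<in> Sh u (e k) K"
      hence w: "w - e k w *\<^sub>R u \<in> K" by (simp add: Sh_def)
      have "w = (w - e k w *\<^sub>R u) + e k w *\<^sub>R u" by simp
      moreover have "e k w \<in> {-d..d}" using ek[rule_format, of w] by (simp add: abs_le_iff)
      ultimately show "w \<in> M d" unfolding M_def using w by blast
    qed
    have IS: "I d \<subseteq> K \<inter> Sh u (e k) K"
    proof
      fix w assume "w \<in> I d"
      hence w: "w \<in> K" "w - d *\<^sub>R u \<in> K" "w + d *\<^sub>R u \<in> K" by (auto simp: I_def)
      define lam where "lam = (d - e k w) / (2 * d)"
      have l: "0 \<le> lam" "lam \<le> 1" using ek[rule_format, of w] d by (auto simp: lam_def field_simps abs_le_iff)
      have "lam *\<^sub>R (w + d *\<^sub>R u) + (1 - lam) *\<^sub>R (w - d *\<^sub>R u) \<in> K"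
        by (rule convexD[OF Kc(2) w(3) w(2)]) (use l in auto)
      moreover have "lam *\<^sub>R (w + d *\<^sub>R u) + (1 - lam) *\<^sub>R (w - d *\<^sub>R u) = w + ((2 * lam - 1) * d) *\<^sub>R u"
        by (simp add: algebra_simps flip: scaleR_add_left)
      moreover have "(2 * lam - 1) * d = - e k w" using d by (simp add: lam_def field_simps)
      ultimately have "w - e k w *\<^sub>R u \<in> K" by simp
      thus "w \<in> K \<inter> Sh u (e k) K" using w by (simp add: Sh_def)
    qed
    have sub: "SD k \<subseteq> Sh u g (M d) - Sh u g (I d)"
    proof
      fix z assume z: "z \<in> SD k"
      define w where "w = z - g z *\<^sub>R u"
      have m1: "z \<in> Dphi u phi K \<longleftrightarrow> w \<in> K" by (simp add: Dphi_def Sh_def w_def g_def)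
      have m2: "z \<in> Dphi u (phis k) K \<longleftrightarrow> w \<in> Sh u (e k) K" unfolding comp by (simp add: Sh_def w_def)
      have "w \<in> (K - Sh u (e k) K) \<union> (Sh u (e k) K - K)" using z m1 m2 by (auto simp: SD_def)
      hence "w \<in> M d - I d" using KM SM IS by blast
      thus "z \<in> Sh u g (M d) - Sh u g (I d)" by (simp add: Sh_def w_def)
    qed
    have SMm: "Sh u g (M d) \<in> lmeasurable" "measure lebesgue (Sh u g (M d)) = measure lebesgue (M d)"
      using Sh_lmeas[OF u gm uig MI(1) MI(2)] by auto
    have SIm: "Sh u g (I d) \<in> lmeasurable" "measure lebesgue (Sh u g (I d)) = measure lebesgue (I d)"
      using Sh_lmeas[OF u gm uig MI(3) MI(4)] by auto
    have IMs: "Sh u g (I d) \<subseteq> Sh u g (M d)" using IS KM by (intro Sh_mono) auto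
    have "measure lebesgue (SD k) \<le> measure lebesgue (Sh u g (M d) - Sh u g (I d))"
      by (rule measure_mono_fmeasurable[OF sub]) (use SDm SMm SIm in \<open>auto intro: fmeasurable_Diff\<close>)
    also have "\<dots> = measure lebesgue (Sh u g (M d)) - measure lebesgue (Sh u g (I d))"
      by (rule measure_Diff) (use SMm SIm IMs in \<open>auto simp: fmeasurable_def\<close>)
    finally show ?thesis using SMm SIm by simp
  qed
  obtain B where B: "\<And>z. \<bar>mid K u (Pu u z)\<bar> \<le> B" using mid_bound[OF u Kc] by blast
  have real_lim: "(\<lambda>k. measure lebesgue (SD k)) \<longlonglongrightarrow> 0"
    unfolding tendsto_iff
  proof (intro allI impI)
    fix r :: real assume r: "r > 0"
    have "eventually (\<lambda>j. measure lebesgue (M (1 / real (Suc j))) - measure lebesgue (I (1 / real (Suc j))) < r) sequentially"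
      using order_tendstoD(2)[OF MI5 r] .
    then obtain j where j: "measure lebesgue (M (1 / real (Suc j))) - measure lebesgue (I (1 / real (Suc j))) < r"
      using eventually_sequentially by auto
    define d where "d = 1 / real (Suc j)"
    have d: "d > 0" by (simp add: d_def)
    have ev: "eventually (\<lambda>k. \<forall>t\<in>{-B..B}. \<bar>phis k t - phi t\<bar> \<le> d) sequentially"
      by (rule unif_conv[OF lips lip lim d])
    show "eventually (\<lambda>k. dist (measure lebesgue (SD k)) 0 < r) sequentially"
    proof (rule eventually_mono[OF ev])
      fix k assume k: "\<forall>t\<in>{-B..B}. \<bar>phis k t - phi t\<bar> \<le> d"
      have "\<forall>z. \<bar>e k z\<bar> \<le> d"
      proof
        fix z
        have "mid K u (Pu u z) \<in> {-B..B}" using B[of z] by (simp add: abs_le_iff)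
        thus "\<bar>e k z\<bar> \<le> d" using k by (simp add: eform)
      qed
      hence "measure lebesgue (SD k) \<le> measure lebesgue (M d) - measure lebesgue (I d)" by (rule bound[OF d])
      hence "measure lebesgue (SD k) < r" using j by (simp add: d_def)
      thus "dist (measure lebesgue (SD k)) 0 < r" by simp
    qed
  qed
  have "(\<lambda>k. ennreal (measure lebesgue (SD k))) \<longlonglongrightarrow> ennreal 0" by (rule tendsto_ennrealI[OF real_lim])
  moreover have "emeasure lebesgue (SD k) = ennreal (measure lebesgue (SD k))" for k
    by (rule emeasure_eq_ennreal_measure[OF fmeasurableD2[OF SDm]])
  ultimately show ?thesis unfolding SD_def by simp
qed

theorem lemma6p1:
  fixes u :: "'a::euclidean_space" and t0 :: real
    and Ds :: "nat \<Rightarrow> 'a set \<Rightarrow> 'a set" and phis :: "nat \<Rightarrow> real \<Rightarrow> real"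
  assumes "DIM('a) \<ge> 2"
    and "norm u = 1"
    and "\<And>k. Ds k \<in> JH u t0"
    and "\<And>k. assoc_contraction u (Ds k) (phis k)"
  shows "(map_conv Ds (Ds 0) \<longrightarrow> (\<forall>t. (\<lambda>k. phis k t) \<longlonglongrightarrow> phis 0 t))
    \<and> (\<forall>phi. (\<forall>t. (\<lambda>k. phis k t) \<longlonglongrightarrow> phi t) \<longrightarrow>
          (\<exists>D. D \<in> JH u t0 \<and> assoc_contraction u D phi \<and> map_conv Ds D
             \<and> (\<forall>D'. D' \<in> JH u t0 \<and> assoc_contraction u D' phi \<and> map_conv Ds D'
                   \<longrightarrow> (\<forall>K. convex_body K \<longrightarrow> ae_eq (D' K) (D K)))))"
proof -
  have u: "norm u = 1" by (rule assms(2))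
  have lips: "lip1 (phis k)" for k using phi_lip[OF u assms(3) assms(4)] by (auto simp: lip1_def)
  show ?thesis
  proof (intro conjI impI allI)
    fix t assume mc: "map_conv Ds (Ds 0)"
    show "(\<lambda>k. phis k t) \<longlonglongrightarrow> phis 0 t" by (rule part1[OF u assms(3) assms(4) mc])
  next
    fix phi assume lim: "\<forall>t. (\<lambda>k. phis k t) \<longlonglongrightarrow> phi t"
    have lip: "lip1 phi" unfolding lip1_def
    proof (intro allI)
      fix s t
      have "(\<lambda>k. \<bar>phis k t - phis k s\<bar>) \<longlonglongrightarrow> \<bar>phi t - phi s\<bar>"
        using lim by (intro tendsto_intros) auto
      moreover have "\<forall>k. \<bar>phis k t - phis k s\<bar> \<le> \<bar>t - s\<bar>" using lips by (auto simp: lip1_def)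
      ultimately show "\<bar>phi t - phi s\<bar> \<le> \<bar>t - s\<bar>" by (intro LIMSEQ_le_const2) auto
    qed
    define D where "D = Dphi u phi"
    have DJ: "D \<in> JH u t0" unfolding D_def by (rule Dphi_JH[OF u lip])
    have DA: "assoc_contraction u D phi" unfolding D_def by (rule Dphi_assoc[OF u])
    have MC: "map_conv Ds D" unfolding map_conv_def
    proof (intro allI impI)
      fix K :: "'a set" assume K: "convex_body K"
      have Kc: "compact K" "convex K" using K by (auto simp: convex_body_def)
      have eq: "emeasure lebesgue ((Ds k K - D K) \<union> (D K - Ds k K)) =
          emeasure lebesgue ((Dphi u (phis k) K - Dphi u phi K) \<union> (Dphi u phi K - Dphi u (phis k) K))" for k
        unfolding D_def
        by (rule symdiff_ae)
           (use JH_fin[OF assms(3) K] Dphi_lmeas(1)[OF u lip Kc] Dphi_lmeas(1)[OF u lips Kc]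
                D_eq_Dphi[OF u assms(3) assms(4) K] ae_eq_refl in auto)
      show "(\<lambda>k. emeasure lebesgue ((Ds k K - D K) \<union> (D K - Ds k K))) \<longlonglongrightarrow> 0"
        unfolding eq by (rule Dphi_conv[OF u _ lip _ K]) (use lips lim in auto)
    qed
    have UQ: "\<forall>D'. D' \<in> JH u t0 \<and> assoc_contraction u D' phi \<and> map_conv Ds D'
                   \<longrightarrow> (\<forall>K. convex_body K \<longrightarrow> ae_eq (D' K) (D K))"
    proof (intro allI impI)
      fix D' :: "'a set \<Rightarrow> 'a set" and K :: "'a set" assume D': "D' \<in> JH u t0 \<and> assoc_contraction u D' phi \<and> map_conv Ds D'" and K: "convex_body K"
      show "ae_eq (D' K) (D K)"
        by (rule limit_unique[OF MC _ K])
           (use D' K JH_fin[OF DJ K] JH_fin[OF _ K] JH_fin[OF assms(3) K] in \<open>auto simp: fmeasurable_def\<close>)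
    qed
    show "\<exists>D. D \<in> JH u t0 \<and> assoc_contraction u D phi \<and> map_conv Ds D
             \<and> (\<forall>D'. D' \<in> JH u t0 \<and> assoc_contraction u D' phi \<and> map_conv Ds D'
                   \<longrightarrow> (\<forall>K. convex_body K \<longrightarrow> ae_eq (D' K) (D K)))"
      using DJ DA MC UQ by blast
  qed
qed

end
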